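(* Let $R$ be a ring and let $A=\sigma(R)\langle x_1,\dots,x_n\rangle$ be a bijective skew PBW extension of $R$ with associated family $\Sigma$. Suppose $R$ is $\Sigma$-rigid, Abelian and NI. If $R$ is a right (resp. left) p.p.-ring, then $A$ has Property $(a.c.)$ on the right (resp. left).
   Context: All rings are associative with identity. For $S\subseteq T$ (a ring $T$), $r_T(S)=\{a\in T: Sa=0\}$ and $\ell_T(S)=\{a\in T: aS=0\}$. A ring $A$ is a skew PBW extension of $R$, written $A=\sigma(R)\langle x_1,\dots,x_n\rangle$, if: (i) $R$ is a subring of $A$ with the same identity; (ii) there are elements $x_1,\dots,x_n\in A$ such that $A$ is a free left $R$-module with basis the standard monomials $x^\alpha=x_1^{\alpha_1}\cdots x_n^{\alpha_n}$, $\alpha\in\mathbb N^n$ (with $x^0=1$); (iii) for each $i$ and each nonzero $r\in R$ there is nonzero $c_{i,r}\in R$ with $x_ir-c_{i,r}x_i\in R$; (iv) for all $i,j$ there is nonzero $d_{i,j}\in R$ with $x_jx_i-d_{i,j}x_ix_j\in R+Rx_1+\cdots+Rx_n$. For such $A$ there are injective endomorphisms $\sigma_i$ of $R$ and $\sigma_i$-derivations $\delta_i$ of $R$ with $x_ir=\sigma_i(r)x_i+\delta_i(r)$ for all $r\in R$; $\Sigma=\{\sigma_1,\dots,\sigma_n\}$. For $\alpha\in\mathbb N^n$, $\sigma^\alpha=\sigma_1^{\alpha_1}\circ\cdots\circ\sigma_n^{\alpha_n}$. The extension is bijective if each $\sigma_i$ is bijective and each $d_{i,j}$ ($1\le i<j\le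 n$) is invertible. $R$ is $\Sigma$-rigid if for $a\in R$ and $\alpha\in\mathbb N^n$, $a\sigma^\alpha(a)=0$ implies $a=0$. $R$ is Abelian if every idempotent of $R$ is central. $R$ is NI if the upper nilradical $\mathrm{nil}^*(R)$ (sum of all nil ideals) equals the set $\mathrm{nil}(R)$ of nilpotent elements. $R$ is a right (resp. left) p.p.-ring if for each $a\in R$ there is an idempotent $e$ with $r_R(a)=eR$ (resp. $\ell_R(a)=Re$). A ring $T$ has Property $(a.c.)$ on the right if for every finitely generated right ideal $I$ of $T$ there is $c\in T$ with $r_T(I)=r_T(cT)$; on the left if for every finitely generated left ideal $I$ there is $c\in T$ with $\ell_T(I)=\ell_T(Tc)$. *)

theory Defs
  imports Main
begin

(* Indices of the variables are 0..n-1 (x 0, ..., x (n-1)) instead of 1..n. *)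

definition exps :: "nat \<Rightarrow> (nat \<Rightarrow> nat) set" where
  "exps n = {\<alpha>. \<forall>i\<ge>n. \<alpha> i = 0}"

definition mono :: "(nat \<Rightarrow> 'a::ring_1) \<Rightarrow> nat \<Rightarrow> (nat \<Rightarrow> nat) \<Rightarrow> 'a" where
  "mono x n \<alpha> = foldr (\<lambda>i m. x i ^ \<alpha> i * m) [0..<n] 1"

definition subring :: "'a::ring_1 set \<Rightarrow> bool" where
  "subring R \<longleftrightarrow> 1 \<in> R \<and> 0 \<in> R \<and> (\<forall>a\<in>R. \<forall>b\<in>R. a + b \<in> R \<and> a - b \<in> R \<and> a * b \<in> R)"

definition lin_span :: "'a::ring_1 set \<Rightarrow> (nat \<Rightarrow> 'a) \<Rightarrow> nat \<Rightarrow> 'a set" where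
  "lin_span R x n = {r0 + (\<Sum>k<n. r k * x k) | r0 r. r0 \<in> R \<and> (\<forall>k<n. r k \<in> R)}"

(* A (= the whole ring 'a) is a skew PBW extension of R in the variables x_0..x_{n-1} *)
definition skew_PBW :: "'a::ring_1 set \<Rightarrow> (nat \<Rightarrow> 'a) \<Rightarrow> nat \<Rightarrow> bool" where
  "skew_PBW R x n \<longleftrightarrow>
     subring R
   \<and> (\<forall>a. \<exists>S c. finite S \<and> S \<subseteq> exps n \<and> (\<forall>\<alpha>\<in>S. c \<alpha> \<in> R) \<and> a = (\<Sum>\<alpha>\<in>S. c \<alpha> * mono x n \<alpha>))
   \<and> (\<forall>S c. finite S \<and> S \<subseteq> exps n \<and> (\<forall>\<alpha>\<in>S. c \<alpha> \<in> R) \<and> (\<Sum>\<alpha>\<in>S. c \<alpha> * mono x n \<alpha>) = 0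
          \<longrightarrow> (\<forall>\<alpha>\<in>S. c \<alpha> = 0))
   \<and> (\<forall>i<n. \<forall>r\<in>R. r \<noteq> 0 \<longrightarrow> (\<exists>c\<in>R. c \<noteq> 0 \<and> x i * r - c * x i \<in> R))
   \<and> (\<forall>i<n. \<forall>j<n. \<exists>d\<in>R. d \<noteq> 0 \<and> x j * x i - d * x i * x j \<in> lin_span R x n)"

(* sigma i, delta i are the injective endomorphisms / sigma_i-derivations of R with
   x_i r = sigma_i(r) x_i + delta_i(r) (they are uniquely determined by freeness) *)
definition skew_PBW_maps ::
  "'a::ring_1 set \<Rightarrow> (nat \<Rightarrow> 'a) \<Rightarrow> nat \<Rightarrow> (nat \<Rightarrow> 'a \<Rightarrow> 'a) \<Rightarrow> (nat \<Rightarrow> 'a \<Rightarrow> 'a) \<Rightarrow> bool" where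
  "skew_PBW_maps R x n \<sigma> \<delta> \<longleftrightarrow>
     (\<forall>i<n. (\<forall>r\<in>R. \<sigma> i r \<in> R \<and> \<delta> i r \<in> R \<and> x i * r = \<sigma> i r * x i + \<delta> i r)
        \<and> inj_on (\<sigma> i) R \<and> \<sigma> i 1 = 1
        \<and> (\<forall>a\<in>R. \<forall>b\<in>R. \<sigma> i (a + b) = \<sigma> i a + \<sigma> i b \<and> \<sigma> i (a * b) = \<sigma> i a * \<sigma> i b
              \<and> \<delta> i (a + b) = \<delta> i a + \<delta> i b \<and> \<delta> i (a * b) = \<sigma> i a * \<delta> i b + \<delta> i a * b))"

definition unit_in :: "'a::ring_1 set \<Rightarrow> 'a \<Rightarrow> bool" where
  "unit_in R d \<longleftrightarrow> d \<in> R \<and> (\<exists>e\<in>R. d * e = 1 \<and> e * d = 1)"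

definition bijective_skew_PBW ::
  "'a::ring_1 set \<Rightarrow> (nat \<Rightarrow> 'a) \<Rightarrow> nat \<Rightarrow> (nat \<Rightarrow> 'a \<Rightarrow> 'a) \<Rightarrow> bool" where
  "bijective_skew_PBW R x n \<sigma> \<longleftrightarrow>
     (\<forall>i<n. bij_betw (\<sigma> i) R R)
   \<and> (\<forall>i j. i < j \<and> j < n \<longrightarrow>
        (\<exists>d. unit_in R d \<and> d \<noteq> 0 \<and> x j * x i - d * x i * x j \<in> lin_span R x n))"

definition sigma_pow :: "(nat \<Rightarrow> 'a \<Rightarrow> 'a) \<Rightarrow> nat \<Rightarrow> (nat \<Rightarrow> nat) \<Rightarrow> 'a \<Rightarrow> 'a" where
  "sigma_pow \<sigma> n \<alpha> = foldr (\<lambda>i f. (\<sigma> i ^^ \<alpha> i) \<circ> f) [0..<n] id"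

definition Sigma_rigid :: "'a::ring_1 set \<Rightarrow> (nat \<Rightarrow> 'a \<Rightarrow> 'a) \<Rightarrow> nat \<Rightarrow> bool" where
  "Sigma_rigid R \<sigma> n \<longleftrightarrow> (\<forall>a\<in>R. \<forall>\<alpha>. a * sigma_pow \<sigma> n \<alpha> a = 0 \<longrightarrow> a = 0)"

definition abelian_ring :: "'a::ring_1 set \<Rightarrow> bool" where
  "abelian_ring R \<longleftrightarrow> (\<forall>e\<in>R. e * e = e \<longrightarrow> (\<forall>r\<in>R. e * r = r * e))"

definition nilpotents :: "'a::ring_1 set \<Rightarrow> 'a set" where
  "nilpotents R = {a\<in>R. \<exists>k. a ^ k = 0}"

definition two_sided_ideal :: "'a::ring_1 set \<Rightarrow> 'a set \<Rightarrow> bool" where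
  "two_sided_ideal R I \<longleftrightarrow> I \<subseteq> R \<and> 0 \<in> I \<and> (\<forall>a\<in>I. \<forall>b\<in>I. a + b \<in> I \<and> - a \<in> I)
     \<and> (\<forall>a\<in>I. \<forall>r\<in>R. r * a \<in> I \<and> a * r \<in> I)"

definition nil_ideal :: "'a::ring_1 set \<Rightarrow> 'a set \<Rightarrow> bool" where
  "nil_ideal R I \<longleftrightarrow> two_sided_ideal R I \<and> I \<subseteq> nilpotents R"

(* upper nilradical: sum of all nil ideals (finite sums of elements of nil ideals) *)
definition upper_nilradical :: "'a::ring_1 set \<Rightarrow> 'a set" where
  "upper_nilradical R = {sum_list ys | ys. \<forall>y\<in>set ys. \<exists>I. nil_ideal R I \<and> y \<in> I}"

definition NI_ring :: "'a::ring_1 set \<Rightarrow> bool" where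
  "NI_ring R \<longleftrightarrow> upper_nilradical R = nilpotents R"

definition r_ann :: "'a::ring_1 set \<Rightarrow> 'a set \<Rightarrow> 'a set" where
  "r_ann T S = {a\<in>T. \<forall>s\<in>S. s * a = 0}"

definition l_ann :: "'a::ring_1 set \<Rightarrow> 'a set \<Rightarrow> 'a set" where
  "l_ann T S = {a\<in>T. \<forall>s\<in>S. a * s = 0}"

definition right_pp :: "'a::ring_1 set \<Rightarrow> bool" where
  "right_pp R \<longleftrightarrow> (\<forall>a\<in>R. \<exists>e\<in>R. e * e = e \<and> r_ann R {a} = {e * r | r. r \<in> R})"

definition left_pp :: "'a::ring_1 set \<Rightarrow> bool" where
  "left_pp R \<longleftrightarrow> (\<forall>a\<in>R. \<exists>e\<in>R. e * e = e \<and> l_ann R {a} = {r * e | r. r \<in> R})"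

(* Property (a.c.) for the ring T = UNIV :: 'a set.
   The right ideal generated by g_0..g_{m-1} is {sum g_k t_k}. *)
definition right_ideal_gen :: "(nat \<Rightarrow> 'a::ring_1) \<Rightarrow> nat \<Rightarrow> 'a set" where
  "right_ideal_gen g m = {(\<Sum>k<m. g k * t k) | t. True}"

definition left_ideal_gen :: "(nat \<Rightarrow> 'a::ring_1) \<Rightarrow> nat \<Rightarrow> 'a set" where
  "left_ideal_gen g m = {(\<Sum>k<m. t k * g k) | t. True}"

definition ac_right :: "'a::ring_1 itself \<Rightarrow> bool" where
  "ac_right _ \<longleftrightarrow> (\<forall>(g::nat \<Rightarrow> 'a) m. \<exists>c. r_ann UNIV (right_ideal_gen g m) = r_ann UNIV {c * t | t. True})"

definition ac_left :: "'a::ring_1 itself \<Rightarrow> bool" where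
  "ac_left _ \<longleftrightarrow> (\<forall>(g::nat \<Rightarrow> 'a) m. \<exists>c. l_ann UNIV (left_ideal_gen g m) = l_ann UNIV {t * c | t. True})"

end

theory Submission
  imports Defs
begin



locale pbw =
  fixes R :: "'a::ring_1 set" and x :: "nat \<Rightarrow> 'a" and n :: nat
    and \<sigma> \<delta> :: "nat \<Rightarrow> 'a \<Rightarrow> 'a"
  assumes spbw: "skew_PBW R x n"
    and maps: "skew_PBW_maps R x n \<sigma> \<delta>"
    and bij: "bijective_skew_PBW R x n \<sigma>"
    and rigid: "Sigma_rigid R \<sigma> n"
begin

abbreviation X where "X \<alpha> \<equiv> mono x n \<alpha>"

lemma sub: "subring R" using spbw unfolding skew_PBW_def by blast
lemma R1[simp]: "1 \<in> R" using sub unfolding subring_def by blast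
lemma R0[simp]: "0 \<in> R" using sub unfolding subring_def by blast
lemma Radd[intro,simp]: "a \<in> R \<Longrightarrow> b \<in> R \<Longrightarrow> a + b \<in> R" using sub unfolding subring_def by blast
lemma Rdiff[intro,simp]: "a \<in> R \<Longrightarrow> b \<in> R \<Longrightarrow> a - b \<in> R" using sub unfolding subring_def by blast
lemma Rmult[intro,simp]: "a \<in> R \<Longrightarrow> b \<in> R \<Longrightarrow> a * b \<in> R" using sub unfolding subring_def by blast
lemma Rminus[intro,simp]: "a \<in> R \<Longrightarrow> - a \<in> R" using Rdiff[of 0 a] by simp
lemma Rsum[intro]: "(\<And>i. i \<in> I \<Longrightarrow> f i \<in> R) \<Longrightarrow> sum f I \<in> R"
  by (induction I rule: infinite_finite_induct) auto

lemma spanning: "\<exists>S c. finite S \<and> S \<subseteq> exps n \<and> (\<forall>\<alpha>\<in>S. c \<alpha> \<in> R) \<and> h = (\<Sum>\<alpha>\<in>S. c \<alpha> * X \<alpha>)"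
  using spbw unfolding skew_PBW_def by blast

lemma free: "finite S \<Longrightarrow> S \<subseteq> exps n \<Longrightarrow> (\<forall>\<alpha>\<in>S. c \<alpha> \<in> R) \<Longrightarrow> (\<Sum>\<alpha>\<in>S. c \<alpha> * X \<alpha>) = 0
   \<Longrightarrow> \<alpha> \<in> S \<Longrightarrow> c \<alpha> = 0"
  using spbw unfolding skew_PBW_def by blast

definition spt :: "((nat \<Rightarrow> nat) \<Rightarrow> 'a) \<Rightarrow> (nat \<Rightarrow> nat) set" where
  "spt c = {\<gamma>. c \<gamma> \<noteq> 0}"

definition repr :: "((nat \<Rightarrow> nat) \<Rightarrow> 'a) \<Rightarrow> bool" where
  "repr c \<longleftrightarrow> finite (spt c) \<and> spt c \<subseteq> exps n \<and> (\<forall>\<gamma>. c \<gamma> \<in> R)"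

definition coef :: "'a \<Rightarrow> (nat \<Rightarrow> nat) \<Rightarrow> 'a" where
  "coef h = (THE c. repr c \<and> h = (\<Sum>\<gamma>\<in>spt c. c \<gamma> * X \<gamma>))"

lemma sum_spt_T:
  assumes "finite T" "spt c \<subseteq> T"
  shows "(\<Sum>\<gamma>\<in>spt c. c \<gamma> * X \<gamma>) = (\<Sum>\<gamma>\<in>T. c \<gamma> * X \<gamma>)"
  by (rule sum.mono_neutral_left) (use assms in \<open>auto simp: spt_def\<close>)

lemma repr_unique:
  assumes "repr c1" "repr c2" "(\<Sum>\<gamma>\<in>spt c1. c1 \<gamma> * X \<gamma>) = (\<Sum>\<gamma>\<in>spt c2. c2 \<gamma> * X \<gamma>)"
  shows "c1 = c2"
proof
  fix \<gamma>
  let ?T = "spt c1 \<union> spt c2"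
  have fT: "finite ?T" and sT: "?T \<subseteq> exps n" using assms(1,2) unfolding repr_def by auto
  have "(\<Sum>\<gamma>\<in>?T. c1 \<gamma> * X \<gamma>) = (\<Sum>\<gamma>\<in>?T. c2 \<gamma> * X \<gamma>)"
    using assms(3) sum_spt_T[OF fT, of c1] sum_spt_T[OF fT, of c2] by auto
  hence "(\<Sum>\<gamma>\<in>?T. (c1 \<gamma> - c2 \<gamma>) * X \<gamma>) = 0"
    by (simp add: left_diff_distrib sum_subtractf)
  moreover have "\<forall>\<alpha>\<in>?T. c1 \<alpha> - c2 \<alpha> \<in> R" using assms(1,2) unfolding repr_def by auto
  ultimately have "\<gamma> \<in> ?T \<Longrightarrow> c1 \<gamma> - c2 \<gamma> = 0"
    using free[OF fT sT, of "\<lambda>\<gamma>. c1 \<gamma> - c2 \<gamma>"] by blast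
  thus "c1 \<gamma> = c2 \<gamma>" by (cases "\<gamma> \<in> ?T") (auto simp: spt_def)
qed

lemma repr_ex: "\<exists>c. repr c \<and> h = (\<Sum>\<gamma>\<in>spt c. c \<gamma> * X \<gamma>)"
proof -
  obtain S c0 where S0: "finite S \<and> S \<subseteq> exps n \<and> (\<forall>\<alpha>\<in>S. c0 \<alpha> \<in> R) \<and> h = (\<Sum>\<alpha>\<in>S. c0 \<alpha> * X \<alpha>)"
    using spanning[of h] by (elim exE) (rule that)
  note S = S0[THEN conjunct1] S0[THEN conjunct2, THEN conjunct1]
    S0[THEN conjunct2, THEN conjunct2, THEN conjunct1] S0[THEN conjunct2, THEN conjunct2, THEN conjunct2]
  define c where "c = (\<lambda>\<gamma>. if \<gamma> \<in> S then c0 \<gamma> else 0)"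
  have sp: "spt c \<subseteq> S" unfolding c_def spt_def by auto
  have "finite (spt c)" using sp S(1) by (rule finite_subset)
  moreover have "\<forall>\<gamma>. c \<gamma> \<in> R" using S(3) by (simp add: c_def)
  ultimately have rc: "repr c" unfolding repr_def using sp S(2) by blast
  have "(\<Sum>\<gamma>\<in>S. c \<gamma> * X \<gamma>) = (\<Sum>\<gamma>\<in>S. c0 \<gamma> * X \<gamma>)"
    by (rule sum.cong) (auto simp: c_def)
  hence "h = (\<Sum>\<gamma>\<in>spt c. c \<gamma> * X \<gamma>)"
    using sum_spt_T[OF S(1) sp] S(4) by simp
  with rc show ?thesis by blast
qed

lemma coef_prop: "repr (coef h) \<and> h = (\<Sum>\<gamma>\<in>spt (coef h). coef h \<gamma> * X \<gamma>)"
proof -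
  obtain c where c: "repr c" "h = (\<Sum>\<gamma>\<in>spt c. c \<gamma> * X \<gamma>)" using repr_ex by blast
  have "\<exists>!c. repr c \<and> h = (\<Sum>\<gamma>\<in>spt c. c \<gamma> * X \<gamma>)"
  proof (rule ex1I)
    show "repr c \<and> h = (\<Sum>\<gamma>\<in>spt c. c \<gamma> * X \<gamma>)" using c by blast
  next
    fix c' assume a: "repr c' \<and> h = (\<Sum>\<gamma>\<in>spt c'. c' \<gamma> * X \<gamma>)"
    show "c' = c"
      by (rule repr_unique) (use a c(1) trans[OF a[THEN conjunct2, symmetric] c(2)] in auto)
  qed
  from theI'[OF this] show ?thesis unfolding coef_def .
qed

lemma coef_R[intro, simp]: "coef h \<gamma> \<in> R"
  using coef_prop unfolding repr_def by blast

lemma coef_fin: "finite (spt (coef h))" and coef_exps: "spt (coef h) \<subseteq> exps n"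
  using coef_prop unfolding repr_def by blast+

lemma coef_out: "\<gamma> \<notin> exps n \<Longrightarrow> coef h \<gamma> = 0"
  using coef_exps unfolding spt_def by blast

lemma coef_expand: "h = (\<Sum>\<gamma>\<in>spt (coef h). coef h \<gamma> * X \<gamma>)"
  using coef_prop by blast

lemma coef_expand_T: "finite T \<Longrightarrow> spt (coef h) \<subseteq> T \<Longrightarrow> h = (\<Sum>\<gamma>\<in>T. coef h \<gamma> * X \<gamma>)"
  using coef_expand[of h] sum_spt_T[of T "coef h"] by (rule trans)

lemma coef_sum_form:
  assumes "finite T" "T \<subseteq> exps n" "\<And>\<gamma>. \<gamma> \<in> T \<Longrightarrow> c \<gamma> \<in> R"
  shows "coef (\<Sum>\<gamma>\<in>T. c \<gamma> * X \<gamma>) = (\<lambda>\<gamma>. if \<gamma> \<in> T then c \<gamma> else 0)"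
proof -
  define c' where "c' = (\<lambda>\<gamma>. if \<gamma> \<in> T then c \<gamma> else 0)"
  have sp: "spt c' \<subseteq> T" unfolding c'_def spt_def by auto
  have "finite (spt c')" using sp assms(1) by (rule finite_subset)
  moreover have "\<forall>\<gamma>. c' \<gamma> \<in> R" using assms(3) by (simp add: c'_def)
  ultimately have r: "repr c'" unfolding repr_def using sp assms(2) by blast
  have e: "(\<Sum>\<gamma>\<in>T. c \<gamma> * X \<gamma>) = (\<Sum>\<gamma>\<in>spt c'. c' \<gamma> * X \<gamma>)"
  proof -
    have "(\<Sum>\<gamma>\<in>T. c \<gamma> * X \<gamma>) = (\<Sum>\<gamma>\<in>T. c' \<gamma> * X \<gamma>)"
      by (rule sum.cong) (simp_all add: c'_def)
    also have "\<dots> = (\<Sum>\<gamma>\<in>spt c'. c' \<gamma> * X \<gamma>)" by (rule sum_spt_T[OF assms(1) sp, symmetric])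
    finally show ?thesis .
  qed
  have "coef (\<Sum>\<gamma>\<in>spt c'. c' \<gamma> * X \<gamma>) = c'"
  proof (rule repr_unique[OF coef_prop[THEN conjunct1] r])
    let ?s = "(\<Sum>\<gamma>\<in>spt c'. c' \<gamma> * X \<gamma>)"
    show "(\<Sum>\<gamma>\<in>spt (coef ?s). coef ?s \<gamma> * X \<gamma>) = ?s"
      by (rule coef_expand[symmetric])
  qed
  thus ?thesis unfolding c'_def[symmetric] e .
qed

lemma coef_add: "coef (h + k) \<gamma> = coef h \<gamma> + coef k \<gamma>"
proof -
  let ?T = "spt (coef h) \<union> spt (coef k)"
  have fT: "finite ?T" using coef_fin by auto
  have "h + k = (\<Sum>\<gamma>\<in>?T. coef h \<gamma> * X \<gamma>) + (\<Sum>\<gamma>\<in>?T. coef k \<gamma> * X \<gamma>)"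
    using coef_expand_T[OF fT, of h] coef_expand_T[OF fT, of k] by (rule arg_cong2) auto
  also have "\<dots> = (\<Sum>\<gamma>\<in>?T. (coef h \<gamma> + coef k \<gamma>) * X \<gamma>)"
    by (simp add: distrib_right sum.distrib)
  finally have "h + k = (\<Sum>\<gamma>\<in>?T. (coef h \<gamma> + coef k \<gamma>) * X \<gamma>)" .
  moreover have T: "?T \<subseteq> exps n" using coef_exps[of h] coef_exps[of k] by blast
  ultimately have "coef (h + k) = (\<lambda>\<gamma>. if \<gamma> \<in> ?T then coef h \<gamma> + coef k \<gamma> else 0)"
    using coef_sum_form[OF fT T, of "\<lambda>\<gamma>. coef h \<gamma> + coef k \<gamma>"] by simp
  thus ?thesis by (auto simp: spt_def)
qed

lemma coef_lmult: "r \<in> R \<Longrightarrow> coef (r * h) \<gamma> = r * coef h \<gamma>"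
proof -
  assume r: "r \<in> R"
  let ?T = "spt (coef h)"
  have fT: "finite ?T" using coef_fin by auto
  have "r * h = r * (\<Sum>\<gamma>\<in>?T. coef h \<gamma> * X \<gamma>)"
    using coef_expand[of h] by (rule arg_cong)
  also have "\<dots> = (\<Sum>\<gamma>\<in>?T. (r * coef h \<gamma>) * X \<gamma>)"
    by (simp add: sum_distrib_left mult.assoc)
  finally have "r * h = (\<Sum>\<gamma>\<in>?T. (r * coef h \<gamma>) * X \<gamma>)" .
  hence "coef (r * h) = (\<lambda>\<gamma>. if \<gamma> \<in> ?T then r * coef h \<gamma> else 0)"
    using coef_sum_form[OF fT coef_exps[of h], of "\<lambda>\<gamma>. r * coef h \<gamma>"] r by simp
  thus ?thesis by (auto simp: spt_def)
qed

lemma coef_0: "coef 0 \<gamma> = 0"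
  using coef_lmult[of 0 0] by simp

lemma coef_uminus: "coef (- h) \<gamma> = - coef h \<gamma>"
  using coef_lmult[of "-1" h] by simp

lemma coef_diff: "coef (h - k) \<gamma> = coef h \<gamma> - coef k \<gamma>"
  using coef_add[of h "-k"] coef_uminus by simp

lemma coef_sum: "coef (\<Sum>i\<in>I. h i) \<gamma> = (\<Sum>i\<in>I. coef (h i) \<gamma>)"
  by (induction I rule: infinite_finite_induct) (auto simp: coef_0 coef_add)

lemma coef_mono: "\<alpha> \<in> exps n \<Longrightarrow> r \<in> R \<Longrightarrow> coef (r * X \<alpha>) \<gamma> = (if \<gamma> = \<alpha> then r else 0)"
  using coef_sum_form[of "{\<alpha>}" "\<lambda>_. r"] by auto

end



fun lexlt :: "nat list \<Rightarrow> nat list \<Rightarrow> bool" where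
  "lexlt (a#as) (b#bs) = (a < b \<or> (a = b \<and> lexlt as bs))"
| "lexlt _ _ = False"

definition addl :: "nat list \<Rightarrow> nat list \<Rightarrow> nat list" where
  "addl zs xs = map (\<lambda>(a,b). a + b) (zip zs xs)"

lemma lexlt_irrefl: "\<not> lexlt xs xs"
  by (induction xs) auto

lemma lexlt_trans: "lexlt xs ys \<Longrightarrow> lexlt ys zs \<Longrightarrow> lexlt xs zs"
proof (induction xs arbitrary: ys zs)
  case Nil then show ?case by simp
next
  case (Cons a as)
  then obtain b bs where ys: "ys = b # bs" by (cases ys) auto
  with Cons obtain c cs where zs: "zs = c # cs" by (cases zs) auto
  show ?case using Cons ys zs by auto
qed

lemma lexlt_total: "length xs = length ys \<Longrightarrow> xs \<noteq> ys \<Longrightarrow> lexlt xs ys \<or> lexlt ys xs"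
proof (induction xs arbitrary: ys)
  case Nil then show ?case by simp
next
  case (Cons a as)
  then obtain b bs where ys: "ys = b # bs" by (cases ys) auto
  show ?case using Cons ys by auto
qed

lemma lexlt_hd: "lexlt (a#as) (b#bs) \<Longrightarrow> a \<le> b"
  by auto

lemma lexlt_add: "length xs = length ys \<Longrightarrow> length ys = length zs \<Longrightarrow> lexlt xs ys
   \<Longrightarrow> lexlt (addl zs xs) (addl zs ys)"
proof (induction xs ys zs rule: list_induct3)
  case Nil then show ?case by simp
next
  case (Cons x xs y ys z zs) then show ?case by (auto simp: addl_def)
qed

lemma addl_Cons[simp]: "addl (a#as) (b#bs) = (a+b) # addl as bs"
  by (simp add: addl_def)

lemma addl_map: "addl (map f xs) (map g xs) = map (\<lambda>i. f i + g i) xs"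
  by (induction xs) (auto simp: addl_def)

context pbw begin

definition deg :: "(nat \<Rightarrow> nat) \<Rightarrow> nat" where
  "deg \<alpha> = (\<Sum>t<n. \<alpha> t)"

definition key :: "(nat \<Rightarrow> nat) \<Rightarrow> nat list" where
  "key \<alpha> = deg \<alpha> # map \<alpha> [0..<n]"

definition lt :: "(nat \<Rightarrow> nat) \<Rightarrow> (nat \<Rightarrow> nat) \<Rightarrow> bool" where
  "lt \<alpha> \<beta> \<longleftrightarrow> lexlt (key \<alpha>) (key \<beta>)"

lemma lt_irrefl: "\<not> lt \<alpha> \<alpha>" unfolding lt_def by (rule lexlt_irrefl)
lemma lt_trans: "lt \<alpha> \<beta> \<Longrightarrow> lt \<beta> \<gamma> \<Longrightarrow> lt \<alpha> \<gamma>" unfolding lt_def by (rule lexlt_trans)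
lemma lt_deg: "lt \<alpha> \<beta> \<Longrightarrow> deg \<alpha> \<le> deg \<beta>" unfolding lt_def key_def by (rule lexlt_hd)

lemma key_inj: assumes "\<alpha> \<in> exps n" "\<beta> \<in> exps n" "key \<alpha> = key \<beta>" shows "\<alpha> = \<beta>"
proof
  fix t
  show "\<alpha> t = \<beta> t"
  proof (cases "t < n")
    case True
    have "map \<alpha> [0..<n] = map \<beta> [0..<n]" using assms(3) unfolding key_def by simp
    then show ?thesis using True by (simp add: map_eq_conv)
  next
    case False then show ?thesis using assms(1,2) unfolding exps_def by auto
  qed
qed

lemma lt_total: "\<alpha> \<in> exps n \<Longrightarrow> \<beta> \<in> exps n \<Longrightarrow> \<alpha> \<noteq> \<beta> \<Longrightarrow> lt \<alpha> \<beta> \<or> lt \<beta> \<alpha>"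
  unfolding lt_def using key_inj lexlt_total[of "key \<alpha>" "key \<beta>"] by (auto simp: key_def)

lemma deg_add: "deg (\<lambda>t. \<alpha> t + \<beta> t) = deg \<alpha> + deg \<beta>"
  unfolding deg_def by (simp add: sum.distrib)

lemma key_add: "key (\<lambda>t. \<alpha> t + \<beta> t) = addl (key \<alpha>) (key \<beta>)"
  unfolding key_def deg_add by (simp add: addl_map)

lemma lt_addL: "lt \<alpha> \<beta> \<Longrightarrow> lt (\<lambda>t. \<gamma> t + \<alpha> t) (\<lambda>t. \<gamma> t + \<beta> t)"
  unfolding lt_def key_add by (rule lexlt_add) (auto simp: key_def)

lemma lt_addR: "lt \<alpha> \<beta> \<Longrightarrow> lt (\<lambda>t. \<alpha> t + \<gamma> t) (\<lambda>t. \<beta> t + \<gamma> t)"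
  using lt_addL[of \<alpha> \<beta> \<gamma>] by (simp add: add.commute)

lemma exps_add: "\<alpha> \<in> exps n \<Longrightarrow> \<beta> \<in> exps n \<Longrightarrow> (\<lambda>t. \<alpha> t + \<beta> t) \<in> exps n"
  unfolding exps_def by auto

lemma exps_upd: "\<alpha> \<in> exps n \<Longrightarrow> i < n \<Longrightarrow> \<alpha>(i := v) \<in> exps n"
  unfolding exps_def by auto

lemma upd_eq: "\<alpha>(i := Suc (\<alpha> i)) = (\<lambda>t. \<alpha> t + (if t = i then 1 else 0))"
  by auto

lemma deg_upd: "i < n \<Longrightarrow> deg (\<alpha>(i := Suc (\<alpha> i))) = Suc (deg \<alpha>)"
  unfolding upd_eq deg_def by (simp add: sum.distrib)

lemma deg0: "\<alpha> \<in> exps n \<Longrightarrow> deg \<alpha> = 0 \<Longrightarrow> \<alpha> = (\<lambda>_. 0)"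
  unfolding deg_def exps_def by (auto simp: not_less) (metis lessThan_iff not_le)

abbreviation F where "F \<alpha> xs z \<equiv> foldr (\<lambda>i m. x i ^ \<alpha> i * m) xs z"

lemma F_cong: "(\<And>i. i \<in> set xs \<Longrightarrow> \<alpha> i = \<beta> i) \<Longrightarrow> F \<alpha> xs z = F \<beta> xs z"
  by (induction xs) auto

lemma F_zero: "(\<And>i. i \<in> set xs \<Longrightarrow> \<alpha> i = 0) \<Longrightarrow> F \<alpha> xs z = z"
  by (induction xs) auto

lemma X_zero: "X (\<lambda>_. 0) = 1"
  unfolding mono_def by (rule F_zero) simp

lemma mono_shift:
  assumes j: "j < n" and z: "\<And>t. t < j \<Longrightarrow> \<mu> t = 0"
  shows "x j * X \<mu> = X (\<mu>(j := Suc (\<mu> j)))"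
proof -
  let ?\<mu> = "\<mu>(j := Suc (\<mu> j))"
  have split: "[0..<n] = [0..<j] @ j # [Suc j..<n]"
  proof -
    have "[0..<n] = [0..<j] @ [j..<n]"
      using upt_add_eq_append[of 0 j "n - j"] j by simp
    also have "[j..<n] = j # [Suc j..<n]" using j by (rule upt_conv_Cons)
    finally show ?thesis .
  qed
  have "X \<mu> = x j ^ \<mu> j * F \<mu> [Suc j..<n] 1"
    unfolding mono_def split foldr_append by (subst F_zero) (auto simp: z)
  moreover have "X ?\<mu> = x j ^ Suc (\<mu> j) * F ?\<mu> [Suc j..<n] 1"
    unfolding mono_def split foldr_append by (subst F_zero) (auto simp: z)
  moreover have "F ?\<mu> [Suc j..<n] 1 = F \<mu> [Suc j..<n] 1"
    by (rule F_cong) auto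
  ultimately show ?thesis by (simp add: mult.assoc)
qed

definition Flt :: "nat \<Rightarrow> 'a set" where
  "Flt m = {h. \<forall>\<gamma>. m \<le> deg \<gamma> \<longrightarrow> coef h \<gamma> = 0}"

lemma Flt_add: "h \<in> Flt m \<Longrightarrow> k \<in> Flt m \<Longrightarrow> h + k \<in> Flt m"
  unfolding Flt_def by (simp add: coef_add)
lemma Flt_diff: "h \<in> Flt m \<Longrightarrow> k \<in> Flt m \<Longrightarrow> h - k \<in> Flt m"
  unfolding Flt_def by (simp add: coef_diff)
lemma Flt_0: "0 \<in> Flt m"
  unfolding Flt_def by (simp add: coef_0)
lemma Flt_lmult: "r \<in> R \<Longrightarrow> h \<in> Flt m \<Longrightarrow> r * h \<in> Flt m"
  unfolding Flt_def by (simp add: coef_lmult)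
lemma Flt_mono: "h \<in> Flt m \<Longrightarrow> m \<le> m' \<Longrightarrow> h \<in> Flt m'"
  unfolding Flt_def by auto
lemma Flt_X: "\<gamma> \<in> exps n \<Longrightarrow> r \<in> R \<Longrightarrow> deg \<gamma> < m \<Longrightarrow> r * X \<gamma> \<in> Flt m"
  unfolding Flt_def by (auto simp: coef_mono)
lemma Flt_sum: "(\<And>i. i \<in> I \<Longrightarrow> h i \<in> Flt m) \<Longrightarrow> (\<Sum>i\<in>I. h i) \<in> Flt m"
  by (induction I rule: infinite_finite_induct) (auto simp: Flt_0 Flt_add)
lemma Flt_expand: "h \<in> Flt m \<Longrightarrow> \<gamma> \<in> spt (coef h) \<Longrightarrow> deg \<gamma> < m"
  unfolding Flt_def spt_def using not_less by blast

end



context pbw begin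

lemma mp: "i < n \<Longrightarrow> r \<in> R \<Longrightarrow> \<sigma> i r \<in> R \<and> \<delta> i r \<in> R \<and> x i * r = \<sigma> i r * x i + \<delta> i r"
  using maps unfolding skew_PBW_maps_def by blast
lemma sR[simp]: "i < n \<Longrightarrow> r \<in> R \<Longrightarrow> \<sigma> i r \<in> R" using mp by blast
lemma dR[simp]: "i < n \<Longrightarrow> r \<in> R \<Longrightarrow> \<delta> i r \<in> R" using mp by blast
lemma xcomm: "i < n \<Longrightarrow> r \<in> R \<Longrightarrow> x i * r = \<sigma> i r * x i + \<delta> i r" using mp by blast
lemma s1[simp]: "i < n \<Longrightarrow> \<sigma> i 1 = 1"
  using maps unfolding skew_PBW_maps_def by blast
lemma sadd: "i < n \<Longrightarrow> a \<in> R \<Longrightarrow> b \<in> R \<Longrightarrow> \<sigma> i (a + b) = \<sigma> i a + \<sigma> i b"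
  using maps unfolding skew_PBW_maps_def by blast
lemma smult: "i < n \<Longrightarrow> a \<in> R \<Longrightarrow> b \<in> R \<Longrightarrow> \<sigma> i (a * b) = \<sigma> i a * \<sigma> i b"
  using maps unfolding skew_PBW_maps_def by blast
lemma dadd: "i < n \<Longrightarrow> a \<in> R \<Longrightarrow> b \<in> R \<Longrightarrow> \<delta> i (a + b) = \<delta> i a + \<delta> i b"
  using maps unfolding skew_PBW_maps_def by blast
lemma dmult: "i < n \<Longrightarrow> a \<in> R \<Longrightarrow> b \<in> R \<Longrightarrow> \<delta> i (a * b) = \<sigma> i a * \<delta> i b + \<delta> i a * b"
  using maps unfolding skew_PBW_maps_def by blast
lemma s0[simp]: "i < n \<Longrightarrow> \<sigma> i 0 = 0"
  using sadd[of i 0 0] by simp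
lemma d0[simp]: "i < n \<Longrightarrow> \<delta> i 0 = 0"
  using dadd[of i 0 0] by simp

lemma foldr_id: "(\<And>t. t \<in> set xs \<Longrightarrow> g t = id) \<Longrightarrow> foldr (\<lambda>t f. g t \<circ> f) xs id = id"
  by (induction xs) auto

lemma foldr_single: "distinct xs \<Longrightarrow> i \<in> set xs \<Longrightarrow> (\<And>t. t \<in> set xs \<Longrightarrow> t \<noteq> i \<Longrightarrow> g t = id)
  \<Longrightarrow> foldr (\<lambda>t f. g t \<circ> f) xs id = g i"
proof (induction xs)
  case Nil then show ?case by simp
next
  case (Cons a xs)
  show ?case
  proof (cases "a = i")
    case True
    have "t \<in> set xs \<Longrightarrow> g t = id" for t using Cons.prems True by (metis distinct.simps(2) list.set_intros(2))
    then have "foldr (\<lambda>t f. g t \<circ> f) xs id = id" by (rule foldr_id)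
    then show ?thesis using True by (metis comp_id foldr_Cons comp_apply)
  next
    case False then show ?thesis using Cons by simp
  qed
qed

lemma rig0: "a \<in> R \<Longrightarrow> a * a = 0 \<Longrightarrow> a = 0"
proof -
  assume a: "a \<in> R" "a * a = 0"
  have "sigma_pow \<sigma> n (\<lambda>_. 0) = id" unfolding sigma_pow_def
    by (rule foldr_id[where g="\<lambda>t. \<sigma> t ^^ 0" and xs="[0..<n]"]) simp
  then show "a = 0" using rigid a unfolding Sigma_rigid_def by (metis id_apply)
qed

lemma rig1: "i < n \<Longrightarrow> a \<in> R \<Longrightarrow> a * \<sigma> i a = 0 \<Longrightarrow> a = 0"
proof -
  assume a: "i < n" "a \<in> R" "a * \<sigma> i a = 0"
  have "sigma_pow \<sigma> n (\<lambda>t. if t = i then 1 else 0) = \<sigma> i ^^ (if i = i then 1 else 0)"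
    unfolding sigma_pow_def
    by (rule foldr_single[where g="\<lambda>t. \<sigma> t ^^ (if t = i then 1 else 0)" and xs="[0..<n]" and i=i]) (use a in auto)
  hence "sigma_pow \<sigma> n (\<lambda>t. if t = i then 1 else 0) = \<sigma> i" by simp
  then show "a = 0" using rigid a unfolding Sigma_rigid_def by metis
qed

lemma red_comm: "a \<in> R \<Longrightarrow> b \<in> R \<Longrightarrow> a * b = 0 \<Longrightarrow> b * a = 0"
proof -
  assume ab: "a \<in> R" "b \<in> R" "a * b = 0"
  have "(b * a) * (b * a) = b * (a * b) * a" by (simp add: mult.assoc)
  also have "\<dots> = 0" using ab by simp
  finally show ?thesis using rig0[of "b * a"] ab by simp
qed

lemma red_mid: "a \<in> R \<Longrightarrow> b \<in> R \<Longrightarrow> r \<in> R \<Longrightarrow> a * b = 0 \<Longrightarrow> a * r * b = 0"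
proof -
  assume ab: "a \<in> R" "b \<in> R" "r \<in> R" "a * b = 0"
  have ba: "b * a = 0" using red_comm ab by blast
  have "(a * r * b) * (a * r * b) = a * r * (b * a) * r * b" by (simp add: mult.assoc)
  also have "\<dots> = 0" using ba by simp
  finally show ?thesis using rig0[of "a * r * b"] ab by simp
qed

lemma sig_ann1: "i < n \<Longrightarrow> u \<in> R \<Longrightarrow> v \<in> R \<Longrightarrow> u * v = 0 \<Longrightarrow> u * \<sigma> i v = 0"
proof -
  assume a: "i < n" "u \<in> R" "v \<in> R" "u * v = 0"
  have vu: "v * u = 0" using red_comm a by blast
  let ?w = "u * \<sigma> i v"
  have "?w * \<sigma> i ?w = u * (\<sigma> i v * \<sigma> i u) * \<sigma> i (\<sigma> i v)"
    using a by (simp add: smult mult.assoc)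
  also have "\<sigma> i v * \<sigma> i u = 0" using a vu smult[of i v u] by simp
  finally have "?w * \<sigma> i ?w = 0" by simp
  then show ?thesis using rig1[of i ?w] a by simp
qed

lemma sig_ann2: "i < n \<Longrightarrow> u \<in> R \<Longrightarrow> v \<in> R \<Longrightarrow> u * \<sigma> i v = 0 \<Longrightarrow> u * v = 0"
proof -
  assume a: "i < n" "u \<in> R" "v \<in> R" "u * \<sigma> i v = 0"
  let ?w = "v * u"
  have "?w * \<sigma> i ?w = v * u * (\<sigma> i v * \<sigma> i u)"
    using a by (simp add: smult)
  also have "\<dots> = v * (u * \<sigma> i v) * \<sigma> i u" by (simp add: mult.assoc)
  also have "\<dots> = 0" using a(4) by simp
  finally have "v * u = 0" using rig1[of i ?w] a by simp
  then show ?thesis using red_comm a by blast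
qed

lemma del_ann: "i < n \<Longrightarrow> a \<in> R \<Longrightarrow> b \<in> R \<Longrightarrow> a * b = 0 \<Longrightarrow> a * \<delta> i b = 0"
proof -
  assume a: "i < n" "a \<in> R" "b \<in> R" "a * b = 0"
  have ba: "b * a = 0" using red_comm a by blast
  have bsa: "b * \<sigma> i a = 0" using sig_ann1 a ba by blast
  have "\<sigma> i a * \<delta> i b + \<delta> i a * b = 0" using dmult[of i a b] a by simp
  hence e: "\<sigma> i a * \<delta> i b = - (\<delta> i a * b)" by (simp add: eq_neg_iff_add_eq_0)
  have "\<sigma> i a * \<delta> i b * \<sigma> i a = - (\<delta> i a * (b * \<sigma> i a))" unfolding e by (simp add: mult.assoc)
  also have "\<dots> = 0" using bsa by simp
  finally have z: "\<sigma> i a * \<delta> i b * \<sigma> i a = 0" .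
  have "(\<delta> i b * \<sigma> i a) * (\<delta> i b * \<sigma> i a) = \<delta> i b * (\<sigma> i a * \<delta> i b * \<sigma> i a)"
    by (simp add: mult.assoc)
  also have "\<dots> = 0" using z by simp
  finally have "\<delta> i b * \<sigma> i a = 0" using rig0[of "\<delta> i b * \<sigma> i a"] a by simp
  hence "\<delta> i b * a = 0" using sig_ann2 a by simp
  then show ?thesis using red_comm a by simp
qed

lemma unit_mult: "unit_in R c \<Longrightarrow> unit_in R d \<Longrightarrow> unit_in R (c * d)"
proof -
  assume c: "unit_in R c" and d: "unit_in R d"
  obtain c' where c': "c' \<in> R" "c * c' = 1" "c' * c = 1" using c unfolding unit_in_def by blast
  obtain d' where d': "d' \<in> R" "d * d' = 1" "d' * d = 1" using d unfolding unit_in_def by blast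
  have "c * d * (d' * c') = 1" using c' d' by (simp add: mult.assoc[symmetric]) (simp add: mult.assoc)
  moreover have "(d' * c') * (c * d) = 1" using c' d' by (simp add: mult.assoc[symmetric]) (simp add: mult.assoc)
  ultimately show ?thesis using c d c' d' unfolding unit_in_def by (metis Rmult)
qed

lemma unit_sig: "i < n \<Longrightarrow> unit_in R c \<Longrightarrow> unit_in R (\<sigma> i c)"
proof -
  assume i: "i < n" and c: "unit_in R c"
  obtain c' where c': "c \<in> R" "c' \<in> R" "c * c' = 1" "c' * c = 1" using c unfolding unit_in_def by blast
  have "\<sigma> i c * \<sigma> i c' = 1" "\<sigma> i c' * \<sigma> i c = 1" using c' i smult[of i c c'] smult[of i c' c] by auto
  then show ?thesis using c' i unfolding unit_in_def by (metis sR)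
qed

lemma unit1: "unit_in R 1" unfolding unit_in_def by auto

lemma unit_cancel: "unit_in R c \<Longrightarrow> y * c = 0 \<Longrightarrow> y = 0"
proof -
  assume c: "unit_in R c" "y * c = 0"
  obtain c' where c': "c * c' = 1" using c unfolding unit_in_def by blast
  have "y = y * c * c'" using c' by (simp add: mult.assoc)
  then show ?thesis using c by simp
qed

lemma unitR: "unit_in R c \<Longrightarrow> c \<in> R" unfolding unit_in_def by blast

lemma dij: "i < j \<Longrightarrow> j < n \<Longrightarrow> \<exists>d. unit_in R d \<and> x j * x i - d * x i * x j \<in> lin_span R x n"
  using bij unfolding bijective_skew_PBW_def by blast

end



context pbw begin

definition Cprop :: "(nat \<Rightarrow> nat) \<Rightarrow> bool" where
  "Cprop \<gamma> \<longleftrightarrow> (\<forall>i<n. \<exists>c. unit_in R c \<and> x i * X \<gamma> - c * X (\<gamma>(i := Suc (\<gamma> i))) \<in> Flt (Suc (deg \<gamma>)))"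

lemma Flt_X1: "\<gamma> \<in> exps n \<Longrightarrow> deg \<gamma> < m \<Longrightarrow> X \<gamma> \<in> Flt m"
  using Flt_X[of \<gamma> 1 m] by simp

lemma E1_gen:
  assumes C: "\<And>\<gamma>. \<gamma> \<in> exps n \<Longrightarrow> deg \<gamma> < m \<Longrightarrow> Cprop \<gamma>"
    and h: "h \<in> Flt m" and j: "j < n"
  shows "x j * h \<in> Flt (Suc m)"
proof -
  let ?S = "spt (coef h)"
  have "x j * h = x j * (\<Sum>\<gamma>\<in>?S. coef h \<gamma> * X \<gamma>)"
    using coef_expand[of h] by (rule arg_cong)
  also have "\<dots> = (\<Sum>\<gamma>\<in>?S. x j * (coef h \<gamma> * X \<gamma>))" by (rule sum_distrib_left)
  finally have eq: "x j * h = (\<Sum>\<gamma>\<in>?S. x j * (coef h \<gamma> * X \<gamma>))" .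
  have "x j * (coef h \<gamma> * X \<gamma>) \<in> Flt (Suc m)" if g: "\<gamma> \<in> ?S" for \<gamma>
  proof -
    have ge: "\<gamma> \<in> exps n" using g coef_exps by blast
    have gd: "deg \<gamma> < m" using g h Flt_expand by blast
    let ?c = "coef h \<gamma>"
    obtain cc where cc: "unit_in R cc" "x j * X \<gamma> - cc * X (\<gamma>(j := Suc (\<gamma> j))) \<in> Flt (Suc (deg \<gamma>))"
      using C[OF ge gd] j unfolding Cprop_def by blast
    define hh where "hh = x j * X \<gamma> - cc * X (\<gamma>(j := Suc (\<gamma> j)))"
    have xX: "x j * X \<gamma> = cc * X (\<gamma>(j := Suc (\<gamma> j))) + hh" unfolding hh_def by simp
    have "x j * (?c * X \<gamma>) = (x j * ?c) * X \<gamma>" by (simp add: mult.assoc)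
    also have "\<dots> = (\<sigma> j ?c * x j + \<delta> j ?c) * X \<gamma>" using xcomm[OF j coef_R] by simp
    also have "\<dots> = \<sigma> j ?c * (x j * X \<gamma>) + \<delta> j ?c * X \<gamma>" by (simp add: distrib_right mult.assoc)
    also have "\<dots> = (\<sigma> j ?c * cc) * X (\<gamma>(j := Suc (\<gamma> j))) + \<sigma> j ?c * hh + \<delta> j ?c * X \<gamma>"
      unfolding xX by (simp add: distrib_left mult.assoc)
    finally have e: "x j * (?c * X \<gamma>) = (\<sigma> j ?c * cc) * X (\<gamma>(j := Suc (\<gamma> j))) + \<sigma> j ?c * hh + \<delta> j ?c * X \<gamma>" .
    have t1: "(\<sigma> j ?c * cc) * X (\<gamma>(j := Suc (\<gamma> j))) \<in> Flt (Suc m)"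
      by (rule Flt_X) (use ge j gd cc unitR deg_upd exps_upd in auto)
    have t2: "\<sigma> j ?c * hh \<in> Flt (Suc m)"
      by (rule Flt_lmult) (use j cc gd in \<open>auto simp: hh_def intro: Flt_mono\<close>)
    have t3: "\<delta> j ?c * X \<gamma> \<in> Flt (Suc m)"
      by (rule Flt_X) (use ge j gd in auto)
    show ?thesis unfolding e by (intro Flt_add t1 t2 t3)
  qed
  then show ?thesis unfolding eq by (rule Flt_sum)
qed

lemma lin_span_mult:
  assumes l: "l \<in> lin_span R x n" and m: "m > 0"
    and C: "\<And>\<gamma>. \<gamma> \<in> exps n \<Longrightarrow> deg \<gamma> < m \<Longrightarrow> Cprop \<gamma>"
    and h: "h \<in> Flt m"
  shows "l * h \<in> Flt (Suc m)"
proof -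
  obtain r0 r where r: "l = r0 + (\<Sum>k<n. r k * x k)" "r0 \<in> R" "\<forall>k<n. r k \<in> R"
    using l unfolding lin_span_def by blast
  have "l * h = r0 * h + (\<Sum>k<n. r k * x k) * h"
    unfolding r(1) by (rule distrib_right)
  also have "(\<Sum>k<n. r k * x k) * h = (\<Sum>k<n. r k * x k * h)" by (rule sum_distrib_right)
  also have "\<dots> = (\<Sum>k<n. r k * (x k * h))" by (rule sum.cong) (simp_all add: mult.assoc)
  finally have "l * h = r0 * h + (\<Sum>k<n. r k * (x k * h))" .
  moreover have "r0 * h \<in> Flt (Suc m)" using Flt_lmult[OF r(2) Flt_mono[OF h, of "Suc m"]] by simp
  moreover have "(\<Sum>k<n. r k * (x k * h)) \<in> Flt (Suc m)"
    by (rule Flt_sum) (use r(3) E1_gen[OF C h] in \<open>auto intro: Flt_lmult\<close>)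
  ultimately show ?thesis by (simp add: Flt_add)
qed

lemma Cprop_all: "\<gamma> \<in> exps n \<Longrightarrow> Cprop \<gamma>"
proof (induction "deg \<gamma>" arbitrary: \<gamma> rule: less_induct)
  case less
  note ge = less.prems
  let ?k = "deg \<gamma>"
  have IH: "\<And>\<mu>. \<mu> \<in> exps n \<Longrightarrow> deg \<mu> < ?k \<Longrightarrow> Cprop \<mu>" using less.hyps by blast
  show ?case unfolding Cprop_def
  proof (intro allI impI)
    fix i assume i: "i < n"
    let ?gi = "\<gamma>(i := Suc (\<gamma> i))"
    show "\<exists>c. unit_in R c \<and> x i * X \<gamma> - c * X ?gi \<in> Flt (Suc ?k)"
    proof (cases "\<forall>t<i. \<gamma> t = 0")
      case True
      have "x i * X \<gamma> = X ?gi" by (rule mono_shift) (use i True in auto)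
      then show ?thesis using unit1 Flt_0 by (intro exI[of _ 1]) auto
    next
      case False
      define j where "j = (LEAST t. t < i \<and> \<gamma> t \<noteq> 0)"
      have jex: "\<exists>t. t < i \<and> \<gamma> t \<noteq> 0" using False by blast
      have ji: "j < i" and gj: "\<gamma> j \<noteq> 0" using LeastI_ex[OF jex] unfolding j_def by auto
      have below: "\<gamma> t = 0" if "t < j" for t
        using not_less_Least[of t "\<lambda>t. t < i \<and> \<gamma> t \<noteq> 0"] that ji unfolding j_def[symmetric] by auto
      have jn: "j < n" using ji i by simp
      define g1 where "g1 = \<gamma>(j := \<gamma> j - 1)"
      have g1e: "g1 \<in> exps n" unfolding g1_def using ge jn by (rule exps_upd)
      have g1g: "g1(j := Suc (g1 j)) = \<gamma>" unfolding g1_def using gj by auto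
      have g1below: "g1 t = 0" if "t < j" for t using below that unfolding g1_def by auto
      have Xg: "X \<gamma> = x j * X g1" using mono_shift[OF jn g1below] g1g by simp
      have dg1: "?k = Suc (deg g1)" using deg_upd[OF jn, of g1] g1g by simp
      obtain d where d: "unit_in R d" "x i * x j - d * x j * x i \<in> lin_span R x n"
        using dij[OF ji i] by blast
      define l where "l = x i * x j - d * x j * x i"
      have xij: "x i * x j = d * x j * x i + l" unfolding l_def by simp
      obtain c' where c': "unit_in R c'" "x i * X g1 - c' * X (g1(i := Suc (g1 i))) \<in> Flt (Suc (deg g1))"
        using IH[OF g1e] dg1 i unfolding Cprop_def by auto
      define g2 where "g2 = g1(i := Suc (g1 i))"
      define h' where "h' = x i * X g1 - c' * X g2"
      have h'F: "h' \<in> Flt ?k" using c'(2) dg1 unfolding h'_def g2_def by simp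
      have xg1: "x i * X g1 = c' * X g2 + h'" unfolding h'_def by simp
      have g2e: "g2 \<in> exps n" unfolding g2_def using g1e i by (rule exps_upd)
      have g2below: "g2 t = 0" if "t < j" for t using g1below that ji unfolding g2_def by auto
      have g2g: "g2(j := Suc (g2 j)) = ?gi" unfolding g2_def g1_def using gj ji by auto
      have xg2: "x j * X g2 = X ?gi" using mono_shift[OF jn g2below] g2g by simp
      have dg2: "deg g2 = ?k" unfolding g2_def using deg_upd[OF i, of g1] dg1 by simp
      have c'R: "c' \<in> R" using c' unitR by blast
      have dR': "d \<in> R" using d unitR by blast
      have "x i * X \<gamma> = (x i * x j) * X g1" unfolding Xg by (simp add: mult.assoc)
      also have "\<dots> = d * (x j * (x i * X g1)) + l * X g1" unfolding xij by (simp add: distrib_right mult.assoc)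
      also have "x j * (x i * X g1) = (x j * c') * X g2 + x j * h'" unfolding xg1 by (simp add: distrib_left mult.assoc)
      also have "x j * c' = \<sigma> j c' * x j + \<delta> j c'" using xcomm[OF jn c'R] .
      also have "(\<sigma> j c' * x j + \<delta> j c') * X g2 = \<sigma> j c' * X ?gi + \<delta> j c' * X g2"
        by (simp add: distrib_right mult.assoc xg2)
      finally have e: "x i * X \<gamma> = (d * \<sigma> j c') * X ?gi + (d * (\<delta> j c' * X g2) + d * (x j * h') + l * X g1)"
        by (simp add: distrib_left mult.assoc add.assoc)
      have Cl: "\<And>\<mu>. \<mu> \<in> exps n \<Longrightarrow> deg \<mu> < ?k \<Longrightarrow> Cprop \<mu>" by (rule IH)
      have kpos: "?k > 0" using dg1 by simp
      have f1: "d * (\<delta> j c' * X g2) \<in> Flt (Suc ?k)"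
        by (intro Flt_lmult dR' Flt_X) (use g2e dg2 jn c'R in auto)
      have f2: "d * (x j * h') \<in> Flt (Suc ?k)"
        by (intro Flt_lmult dR' E1_gen[OF Cl h'F jn])
      have f3: "l * X g1 \<in> Flt (Suc ?k)"
      proof (rule lin_span_mult)
        show "l \<in> lin_span R x n" using d(2) unfolding l_def .
        show "?k > 0" by (rule kpos)
        show "\<And>\<mu>. \<mu> \<in> exps n \<Longrightarrow> deg \<mu> < ?k \<Longrightarrow> Cprop \<mu>" by (rule IH)
        show "X g1 \<in> Flt ?k" using Flt_X1[OF g1e] dg1 by simp
      qed
      have "x i * X \<gamma> - (d * \<sigma> j c') * X ?gi \<in> Flt (Suc ?k)"
        unfolding e using f1 f2 f3 by (simp add: Flt_add)
      moreover have "unit_in R (d * \<sigma> j c')" using unit_mult unit_sig d c' jn by blast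
      ultimately show ?thesis by blast
    qed
  qed
qed

lemma E1: "h \<in> Flt m \<Longrightarrow> j < n \<Longrightarrow> x j * h \<in> Flt (Suc m)"
  using E1_gen Cprop_all by blast

end



context pbw begin

lemma zero_exps: "(\<lambda>_. 0) \<in> exps n" unfolding exps_def by simp

lemma X_first:
  assumes ae: "\<alpha> \<in> exps n" and d: "deg \<alpha> = Suc k"
  obtains j \<alpha>' where "j < n" "\<alpha>' \<in> exps n" "deg \<alpha>' = k" "X \<alpha> = x j * X \<alpha>'" "\<alpha> = \<alpha>'(j := Suc (\<alpha>' j))"
proof -
  have "\<exists>t. \<alpha> t \<noteq> 0"
  proof (rule ccontr)
    assume "\<not> (\<exists>t. \<alpha> t \<noteq> 0)"
    then have "\<alpha> = (\<lambda>_. 0)" by auto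
    then show False using d unfolding deg_def by simp
  qed
  define j where "j = (LEAST t. \<alpha> t \<noteq> 0)"
  have aj: "\<alpha> j \<noteq> 0" unfolding j_def by (rule LeastI_ex) fact
  have below: "\<alpha> t = 0" if "t < j" for t using not_less_Least[of t "\<lambda>t. \<alpha> t \<noteq> 0"] that unfolding j_def by auto
  have jn: "j < n" using aj ae unfolding exps_def using not_less by blast
  define \<alpha>' where "\<alpha>' = \<alpha>(j := \<alpha> j - 1)"
  have e: "\<alpha>' \<in> exps n" unfolding \<alpha>'_def using ae jn by (rule exps_upd)
  have g: "\<alpha>'(j := Suc (\<alpha>' j)) = \<alpha>" unfolding \<alpha>'_def using aj by auto
  have b': "\<alpha>' t = 0" if "t < j" for t using below that unfolding \<alpha>'_def by auto
  have "X \<alpha> = x j * X \<alpha>'" using mono_shift[OF jn b'] g by simp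
  moreover have "deg \<alpha>' = k" using deg_upd[OF jn, of \<alpha>'] g d by simp
  ultimately show ?thesis using that jn e g by simp
qed

lemma prodD:
  assumes "\<alpha> \<in> exps n" "\<beta> \<in> exps n" "b \<in> R"
  shows "\<exists>b' c. b' \<in> R \<and> unit_in R c \<and> (\<forall>u\<in>R. u * b' = 0 \<longleftrightarrow> u * b = 0) \<and>
     X \<alpha> * (b * X \<beta>) - (b' * c) * X (\<lambda>t. \<alpha> t + \<beta> t) \<in> Flt (deg \<alpha> + deg \<beta>)"
  using assms(1)
proof (induction "deg \<alpha>" arbitrary: \<alpha>)
  case 0
  then have a0: "\<alpha> = (\<lambda>_. 0)" using deg0 by simp
  show ?case
    by (rule exI[of _ b], rule exI[of _ 1]) (use a0 assms unit1 Flt_0 in \<open>simp add: X_zero\<close>)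
next
  case (Suc k)
  obtain j \<alpha>' where j: "j < n" "\<alpha>' \<in> exps n" "deg \<alpha>' = k" "X \<alpha> = x j * X \<alpha>'"
     "\<alpha> = \<alpha>'(j := Suc (\<alpha>' j))"
    using X_first[OF Suc.prems Suc.hyps(2)[symmetric]] by blast
  obtain b' c where bc: "b' \<in> R" "unit_in R c" "\<forall>u\<in>R. u * b' = 0 \<longleftrightarrow> u * b = 0"
    "X \<alpha>' * (b * X \<beta>) - (b' * c) * X (\<lambda>t. \<alpha>' t + \<beta> t) \<in> Flt (deg \<alpha>' + deg \<beta>)"
    using Suc.hyps(1)[OF j(3)[symmetric] j(2)] by blast
  let ?g = "\<lambda>t. \<alpha>' t + \<beta> t"
  have ge: "?g \<in> exps n" using j(2) assms(2) by (rule exps_add)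
  define h where "h = X \<alpha>' * (b * X \<beta>) - (b' * c) * X ?g"
  have hF: "h \<in> Flt (deg \<alpha>' + deg \<beta>)" using bc(4) unfolding h_def .
  have cR: "c \<in> R" using bc unitR by blast
  have bcR: "b' * c \<in> R" using bc cR by simp
  obtain cc where cc: "unit_in R cc" "x j * X ?g - cc * X (?g(j := Suc (?g j))) \<in> Flt (Suc (deg ?g))"
    using Cprop_all[OF ge] j(1) unfolding Cprop_def by blast
  have gg: "?g(j := Suc (?g j)) = (\<lambda>t. \<alpha> t + \<beta> t)" using j(5) by auto
  define h2 where "h2 = x j * X ?g - cc * X (\<lambda>t. \<alpha> t + \<beta> t)"
  have h2F: "h2 \<in> Flt (Suc (deg ?g))" using cc(2) gg unfolding h2_def by simp
  have dg: "deg ?g = deg \<alpha>' + deg \<beta>" by (rule deg_add)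
  have da: "deg \<alpha> + deg \<beta> = Suc (deg \<alpha>' + deg \<beta>)" using Suc.hyps(2) j(3) by simp
  have "X \<alpha> * (b * X \<beta>) = x j * (X \<alpha>' * (b * X \<beta>))" unfolding j(4) by (simp add: mult.assoc)
  also have "X \<alpha>' * (b * X \<beta>) = (b' * c) * X ?g + h" unfolding h_def by simp
  also have "x j * ((b' * c) * X ?g + h) = (x j * (b' * c)) * X ?g + x j * h"
    by (simp add: distrib_left mult.assoc)
  also have "x j * (b' * c) = \<sigma> j (b' * c) * x j + \<delta> j (b' * c)" using xcomm[OF j(1) bcR] .
  also have "(\<sigma> j (b' * c) * x j + \<delta> j (b' * c)) * X ?g = \<sigma> j (b' * c) * (x j * X ?g) + \<delta> j (b' * c) * X ?g"
    by (simp add: distrib_right mult.assoc)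
  also have "x j * X ?g = cc * X (\<lambda>t. \<alpha> t + \<beta> t) + h2" unfolding h2_def by simp
  finally have e: "X \<alpha> * (b * X \<beta>) = (\<sigma> j b' * (\<sigma> j c * cc)) * X (\<lambda>t. \<alpha> t + \<beta> t)
      + (\<sigma> j (b' * c) * h2 + \<delta> j (b' * c) * X ?g + x j * h)"
    using smult[OF j(1) bc(1) cR] by (simp add: distrib_left mult.assoc add.assoc)
  have f1: "\<sigma> j (b' * c) * h2 \<in> Flt (deg \<alpha> + deg \<beta>)"
    using Flt_lmult[OF sR[OF j(1) bcR] h2F] dg da by simp
  have f2: "\<delta> j (b' * c) * X ?g \<in> Flt (deg \<alpha> + deg \<beta>)"
    by (rule Flt_X) (use ge j(1) bcR dg da in auto)
  have f3: "x j * h \<in> Flt (deg \<alpha> + deg \<beta>)" using E1[OF hF j(1)] da by simp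
  have "X \<alpha> * (b * X \<beta>) - (\<sigma> j b' * (\<sigma> j c * cc)) * X (\<lambda>t. \<alpha> t + \<beta> t) \<in> Flt (deg \<alpha> + deg \<beta>)"
    unfolding e using f1 f2 f3 by (simp add: Flt_add)
  moreover have "unit_in R (\<sigma> j c * cc)" using unit_mult unit_sig j(1) bc(2) cc(1) by blast
  moreover have "\<sigma> j b' \<in> R" using j(1) bc(1) by simp
  moreover have "\<forall>u\<in>R. u * \<sigma> j b' = 0 \<longleftrightarrow> u * b = 0"
    using bc(1,3) sig_ann1[OF j(1)] sig_ann2[OF j(1)] by blast
  ultimately show ?case by blast
qed

definition K :: "'a \<Rightarrow> 'a set" where
  "K a = {h. \<forall>\<gamma>. a * coef h \<gamma> = 0}"

lemma K_ann: "h \<in> K a \<Longrightarrow> a * h = 0"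
proof -
  assume h: "h \<in> K a"
  have "a * h = a * (\<Sum>\<gamma>\<in>spt (coef h). coef h \<gamma> * X \<gamma>)" using coef_expand[of h] by (rule arg_cong)
  also have "\<dots> = (\<Sum>\<gamma>\<in>spt (coef h). (a * coef h \<gamma>) * X \<gamma>)" by (simp add: sum_distrib_left mult.assoc)
  also have "\<dots> = 0" using h unfolding K_def by simp
  finally show ?thesis .
qed

lemma K_add: "h \<in> K a \<Longrightarrow> k \<in> K a \<Longrightarrow> h + k \<in> K a"
  unfolding K_def by (simp add: coef_add distrib_left)

lemma K_sum: "(\<And>i. i \<in> I \<Longrightarrow> h i \<in> K a) \<Longrightarrow> (\<Sum>i\<in>I. h i) \<in> K a"
  by (induction I rule: infinite_finite_induct) (auto simp: K_def coef_0 coef_add distrib_left)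

lemma K_lmult: "a \<in> R \<Longrightarrow> r \<in> R \<Longrightarrow> a * r = 0 \<Longrightarrow> r * h \<in> K a"
  unfolding K_def by (simp add: coef_lmult mult.assoc[symmetric])

lemma K_x: assumes a: "a \<in> R" and h: "h \<in> K a" and i: "i < n" shows "x i * h \<in> K a"
proof -
  let ?S = "spt (coef h)"
  have "x i * h = x i * (\<Sum>\<gamma>\<in>?S. coef h \<gamma> * X \<gamma>)" using coef_expand[of h] by (rule arg_cong)
  also have "\<dots> = (\<Sum>\<gamma>\<in>?S. x i * (coef h \<gamma> * X \<gamma>))" by (rule sum_distrib_left)
  finally have eq: "x i * h = (\<Sum>\<gamma>\<in>?S. x i * (coef h \<gamma> * X \<gamma>))" .
  have "x i * (coef h \<gamma> * X \<gamma>) \<in> K a" for \<gamma>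
  proof -
    let ?c = "coef h \<gamma>"
    have ac: "a * ?c = 0" using h unfolding K_def by blast
    have "x i * (?c * X \<gamma>) = (x i * ?c) * X \<gamma>" by (simp add: mult.assoc)
    also have "\<dots> = \<sigma> i ?c * (x i * X \<gamma>) + \<delta> i ?c * X \<gamma>"
      using xcomm[OF i coef_R] by (simp add: distrib_right mult.assoc)
    finally have e: "x i * (?c * X \<gamma>) = \<sigma> i ?c * (x i * X \<gamma>) + \<delta> i ?c * X \<gamma>" .
    show ?thesis unfolding e
      by (intro K_add K_lmult) (use a i ac sig_ann1 del_ann in auto)
  qed
  then show ?thesis unfolding eq by (intro K_sum)
qed

lemma K_pow: "a \<in> R \<Longrightarrow> h \<in> K a \<Longrightarrow> i < n \<Longrightarrow> x i ^ k * h \<in> K a"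
  by (induction k) (auto simp: mult.assoc intro: K_x)

lemma K_F: "a \<in> R \<Longrightarrow> h \<in> K a \<Longrightarrow> (\<And>i. i \<in> set xs \<Longrightarrow> i < n) \<Longrightarrow> F \<alpha> xs 1 * h \<in> K a"
  by (induction xs) (auto simp: mult.assoc intro: K_pow)

lemma K_X: "a \<in> R \<Longrightarrow> h \<in> K a \<Longrightarrow> X \<alpha> * h \<in> K a"
  unfolding mono_def by (rule K_F) auto

lemma K_R: "a \<in> R \<Longrightarrow> y \<in> R \<Longrightarrow> a * y = 0 \<Longrightarrow> y \<in> K a"
  using K_lmult[of a y 1] by simp

lemma Gann: "a \<in> R \<Longrightarrow> y \<in> R \<Longrightarrow> a * y = 0 \<Longrightarrow> a * (X \<alpha> * y) = 0"
  using K_ann K_X K_R by blast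

end



context pbw begin

lemma max_ex: "finite S \<Longrightarrow> S \<noteq> {} \<Longrightarrow> S \<subseteq> exps n \<Longrightarrow> \<exists>m\<in>S. \<forall>s\<in>S. s \<noteq> m \<longrightarrow> lt s m"
proof (induction S rule: finite_ne_induct)
  case (singleton x) then show ?case by simp
next
  case (insert x F)
  then obtain m where m: "m \<in> F" "\<forall>s\<in>F. s \<noteq> m \<longrightarrow> lt s m" by auto
  have xe: "x \<in> exps n" and me: "m \<in> exps n" using insert m by auto
  show ?case
  proof (cases "lt m x")
    case True
    then show ?thesis using m lt_trans by (intro bexI[of _ x]) auto
  next
    case False
    then have "lt x m" using lt_total[OF xe me] insert m by auto
    then show ?thesis using m by (intro bexI[of _ m]) auto
  qed
qed

lemma coef_small:
  assumes "\<alpha> \<in> exps n" "\<beta> \<in> exps n" "b \<in> R" "lt (\<lambda>t. \<alpha> t + \<beta> t) \<delta>0"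
  shows "coef (X \<alpha> * (b * X \<beta>)) \<delta>0 = 0"
proof -
  obtain b' c where bc: "b' \<in> R" "unit_in R c"
     "X \<alpha> * (b * X \<beta>) - (b' * c) * X (\<lambda>t. \<alpha> t + \<beta> t) \<in> Flt (deg \<alpha> + deg \<beta>)"
    using prodD[OF assms(1-3)] by blast
  define h where "h = X \<alpha> * (b * X \<beta>) - (b' * c) * X (\<lambda>t. \<alpha> t + \<beta> t)"
  have e: "X \<alpha> * (b * X \<beta>) = (b' * c) * X (\<lambda>t. \<alpha> t + \<beta> t) + h" unfolding h_def by simp
  have ne: "\<delta>0 \<noteq> (\<lambda>t. \<alpha> t + \<beta> t)" using assms(4) lt_irrefl by auto
  have dd: "deg \<alpha> + deg \<beta> \<le> deg \<delta>0" using lt_deg[OF assms(4)] deg_add by simp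
  have "coef h \<delta>0 = 0" using bc(3) dd unfolding h_def Flt_def by blast
  moreover have "coef ((b' * c) * X (\<lambda>t. \<alpha> t + \<beta> t)) \<delta>0 = 0"
    using coef_mono[OF exps_add[OF assms(1,2)], of "b' * c" \<delta>0] ne bc unitR by simp
  ultimately show ?thesis unfolding e coef_add by simp
qed

lemma coef_top:
  assumes "\<alpha> \<in> exps n" "\<beta> \<in> exps n" "b \<in> R"
  shows "\<exists>b' c. b' \<in> R \<and> unit_in R c \<and> (\<forall>u\<in>R. u * b' = 0 \<longleftrightarrow> u * b = 0) \<and>
     coef (X \<alpha> * (b * X \<beta>)) (\<lambda>t. \<alpha> t + \<beta> t) = b' * c"
proof -
  obtain b' c where bc: "b' \<in> R" "unit_in R c" "\<forall>u\<in>R. u * b' = 0 \<longleftrightarrow> u * b = 0"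
     "X \<alpha> * (b * X \<beta>) - (b' * c) * X (\<lambda>t. \<alpha> t + \<beta> t) \<in> Flt (deg \<alpha> + deg \<beta>)"
    using prodD[OF assms(1-3)] by blast
  define h where "h = X \<alpha> * (b * X \<beta>) - (b' * c) * X (\<lambda>t. \<alpha> t + \<beta> t)"
  have e: "X \<alpha> * (b * X \<beta>) = (b' * c) * X (\<lambda>t. \<alpha> t + \<beta> t) + h" unfolding h_def by simp
  have "coef h (\<lambda>t. \<alpha> t + \<beta> t) = 0" using bc(4) deg_add unfolding h_def Flt_def by simp
  moreover have "coef ((b' * c) * X (\<lambda>t. \<alpha> t + \<beta> t)) (\<lambda>t. \<alpha> t + \<beta> t) = b' * c"
    using coef_mono[OF exps_add[OF assms(1,2)], of "b' * c"] bc unitR by simp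
  ultimately show ?thesis unfolding e coef_add using bc by auto
qed

lemma prod_expand:
  "f * g = (\<Sum>\<alpha>\<in>spt (coef f). \<Sum>\<beta>\<in>spt (coef g). coef f \<alpha> * (X \<alpha> * (coef g \<beta> * X \<beta>)))"
proof -
  have "f * g = (\<Sum>\<alpha>\<in>spt (coef f). coef f \<alpha> * X \<alpha>) * (\<Sum>\<beta>\<in>spt (coef g). coef g \<beta> * X \<beta>)"
    using coef_expand[of f] coef_expand[of g] by (rule arg_cong2)
  also have "\<dots> = (\<Sum>\<alpha>\<in>spt (coef f). \<Sum>\<beta>\<in>spt (coef g). (coef f \<alpha> * X \<alpha>) * (coef g \<beta> * X \<beta>))"
    by (rule sum_product)
  also have "\<dots> = (\<Sum>\<alpha>\<in>spt (coef f). \<Sum>\<beta>\<in>spt (coef g). coef f \<alpha> * (X \<alpha> * (coef g \<beta> * X \<beta>)))"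
    by (simp add: mult.assoc)
  finally show ?thesis .
qed

lemma arm_step:
  assumes fg: "f * g = 0" and bm: "\<beta>m \<in> spt (coef g)" and bmax: "\<forall>s\<in>spt (coef g). s \<noteq> \<beta>m \<longrightarrow> lt s \<beta>m"
  shows "coef f \<alpha> * coef g \<beta>m = 0"
proof (rule ccontr)
  let ?b = "coef g \<beta>m"
  let ?Sf = "spt (coef f)" and ?Sg = "spt (coef g)"
  let ?a = "coef f"
  define Bad where "Bad = {\<alpha>\<in>?Sf. ?a \<alpha> * ?b \<noteq> 0}"
  assume "?a \<alpha> * ?b \<noteq> 0"
  then have "\<alpha> \<in> Bad" unfolding Bad_def spt_def by auto
  then have "Bad \<noteq> {}" by blast
  moreover have "finite Bad" unfolding Bad_def using coef_fin by simp
  moreover have BS: "Bad \<subseteq> exps n" unfolding Bad_def using coef_exps by blast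
  ultimately obtain \<alpha>0 where a0: "\<alpha>0 \<in> Bad" "\<forall>s\<in>Bad. s \<noteq> \<alpha>0 \<longrightarrow> lt s \<alpha>0" using max_ex by blast
  have a0S: "\<alpha>0 \<in> ?Sf" using a0 unfolding Bad_def by blast
  have a0e: "\<alpha>0 \<in> exps n" using a0 BS by blast
  have bme: "\<beta>m \<in> exps n" using bm coef_exps by blast
  let ?d = "\<lambda>t. \<alpha>0 t + \<beta>m t"
  obtain b' c where bc: "b' \<in> R" "unit_in R c" "\<forall>u\<in>R. u * b' = 0 \<longleftrightarrow> u * ?b = 0"
     "coef (X \<alpha>0 * (?b * X \<beta>m)) ?d = b' * c"
    using coef_top[OF a0e bme coef_R] by blast
  define T where "T = (\<lambda>\<alpha> \<beta>. ?b * ?a \<alpha> * coef (X \<alpha> * (coef g \<beta> * X \<beta>)) ?d)"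
  have T0: "T \<alpha> \<beta> = (if \<alpha> = \<alpha>0 \<and> \<beta> = \<beta>m then ?b * ?a \<alpha>0 * (b' * c) else 0)"
    if a: "\<alpha> \<in> ?Sf" and b: "\<beta> \<in> ?Sg" for \<alpha> \<beta>
  proof -
    have ae: "\<alpha> \<in> exps n" using a coef_exps by blast
    have be: "\<beta> \<in> exps n" using b coef_exps by blast
    have bb: "\<beta> = \<beta>m \<or> lt \<beta> \<beta>m" using bmax b by blast
    consider "\<alpha> = \<alpha>0" | "lt \<alpha>0 \<alpha>" | "lt \<alpha> \<alpha>0" using lt_total[OF ae a0e] by blast
    then show ?thesis
    proof cases
      case 1
      show ?thesis
      proof (cases "\<beta> = \<beta>m")
        case True then show ?thesis using 1 bc(4) unfolding T_def by simp
      next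
        case False
        then have "lt \<beta> \<beta>m" using bb by blast
        then have "lt (\<lambda>t. \<alpha> t + \<beta> t) ?d" using 1 lt_addL by blast
        then show ?thesis using coef_small[OF ae be coef_R] False unfolding T_def by simp
      qed
    next
      case 2
      have "\<alpha> \<notin> Bad"
      proof
        assume "\<alpha> \<in> Bad"
        moreover have "\<alpha> \<noteq> \<alpha>0" using 2 lt_irrefl by metis
        ultimately have "lt \<alpha> \<alpha>0" using a0(2) by blast
        then show False using 2 lt_trans lt_irrefl by blast
      qed
      then have "?a \<alpha> * ?b = 0" using a unfolding Bad_def by blast
      then have "?b * ?a \<alpha> = 0" using red_comm by simp
      moreover have "\<alpha> \<noteq> \<alpha>0" using 2 lt_irrefl by blast
      ultimately show ?thesis unfolding T_def by simp
    next
      case 3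
      have l1: "lt (\<lambda>t. \<alpha> t + \<beta> t) (\<lambda>t. \<alpha>0 t + \<beta> t)" using 3 lt_addR by blast
      have "lt (\<lambda>t. \<alpha> t + \<beta> t) ?d"
      proof (cases "\<beta> = \<beta>m")
        case True then show ?thesis using l1 by simp
      next
        case False
        then have "lt (\<lambda>t. \<alpha>0 t + \<beta> t) ?d" using bb lt_addL by blast
        then show ?thesis using l1 lt_trans by blast
      qed
      moreover have "\<alpha> \<noteq> \<alpha>0" using 3 lt_irrefl by blast
      ultimately show ?thesis using coef_small[OF ae be coef_R] unfolding T_def by simp
    qed
  qed
  have "0 = ?b * coef (f * g) ?d" using fg coef_0 by simp
  also have "coef (f * g) ?d = (\<Sum>\<alpha>\<in>?Sf. \<Sum>\<beta>\<in>?Sg. ?a \<alpha> * coef (X \<alpha> * (coef g \<beta> * X \<beta>)) ?d)"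
    by (subst prod_expand) (simp add: coef_sum coef_lmult)
  also have "?b * \<dots> = (\<Sum>\<alpha>\<in>?Sf. \<Sum>\<beta>\<in>?Sg. T \<alpha> \<beta>)"
    unfolding T_def by (simp add: sum_distrib_left mult.assoc)
  also have "\<dots> = (\<Sum>\<alpha>\<in>?Sf. \<Sum>\<beta>\<in>?Sg. (if \<alpha> = \<alpha>0 \<and> \<beta> = \<beta>m then ?b * ?a \<alpha>0 * (b' * c) else 0))"
    by (intro sum.cong refl) (simp add: T0)
  also have "\<dots> = (\<Sum>\<alpha>\<in>?Sf. if \<alpha> = \<alpha>0 then ?b * ?a \<alpha>0 * (b' * c) else 0)"
  proof (rule sum.cong[OF refl])
    fix \<alpha> show "(\<Sum>\<beta>\<in>?Sg. (if \<alpha> = \<alpha>0 \<and> \<beta> = \<beta>m then ?b * ?a \<alpha>0 * (b' * c) else 0))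
       = (if \<alpha> = \<alpha>0 then ?b * ?a \<alpha>0 * (b' * c) else 0)"
    proof (cases "\<alpha> = \<alpha>0")
      case True then show ?thesis using bm(1) coef_fin[of g] by (simp add: sum.delta)
    next
      case False then show ?thesis by simp
    qed
  qed
  also have "\<dots> = ?b * ?a \<alpha>0 * (b' * c)"
    using a0S coef_fin[of f] by (simp add: sum.delta)
  finally have z: "?b * ?a \<alpha>0 * b' * c = 0" by (simp add: mult.assoc)
  have "?b * ?a \<alpha>0 * b' = 0" using unit_cancel[OF bc(2) z] .
  then have "?b * ?a \<alpha>0 * ?b = 0" using bc(3) by simp
  then have "(?a \<alpha>0 * ?b) * (?a \<alpha>0 * ?b) = 0" by (simp add: mult.assoc)
  then have "?a \<alpha>0 * ?b = 0" by (rule rig0[rotated]) simp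
  then show False using a0 unfolding Bad_def by blast
qed

lemma arm: "f * g = 0 \<Longrightarrow> coef f \<alpha> * coef g \<beta> = 0"
proof (induction "card (spt (coef g))" arbitrary: g rule: less_induct)
  case less
  show ?case
  proof (cases "spt (coef g) = {}")
    case True
    then have "coef g \<beta> = 0" unfolding spt_def by blast
    then show ?thesis by simp
  next
    case False
    obtain \<beta>m where bm: "\<beta>m \<in> spt (coef g)" "\<forall>s\<in>spt (coef g). s \<noteq> \<beta>m \<longrightarrow> lt s \<beta>m"
      using max_ex[OF coef_fin False coef_exps] by blast
    let ?b = "coef g \<beta>m"
    have all: "coef f \<alpha>' * ?b = 0" for \<alpha>' by (rule arm_step[OF less.prems bm])
    have bme: "\<beta>m \<in> exps n" using bm coef_exps by blast
    define g' where "g' = g - ?b * X \<beta>m"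
    have cg': "coef g' \<gamma> = (if \<gamma> = \<beta>m then 0 else coef g \<gamma>)" for \<gamma>
      unfolding g'_def coef_diff coef_mono[OF bme coef_R] by simp
    have sp': "spt (coef g') = spt (coef g) - {\<beta>m}" unfolding spt_def using cg' by auto
    have card: "card (spt (coef g')) < card (spt (coef g))"
      unfolding sp' by (rule card_Diff1_less[OF coef_fin bm(1)])
    have "f * (?b * X \<beta>m) = (\<Sum>\<alpha>\<in>spt (coef f). coef f \<alpha> * X \<alpha>) * (?b * X \<beta>m)"
      using coef_expand[of f] by (rule arg_cong)
    also have "\<dots> = (\<Sum>\<alpha>\<in>spt (coef f). (coef f \<alpha> * (X \<alpha> * ?b)) * X \<beta>m)"
      by (simp add: sum_distrib_right mult.assoc)
    also have "\<dots> = 0" using Gann[OF coef_R coef_R all] by simp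
    finally have "f * g' = 0" unfolding g'_def using less.prems by (simp add: right_diff_distrib)
    then have ih: "coef f \<alpha> * coef g' \<beta> = 0" using less.hyps[OF card] by blast
    show ?thesis
    proof (cases "\<beta> = \<beta>m")
      case True then show ?thesis using all by simp
    next
      case False then show ?thesis using ih cg' by simp
    qed
  qed
qed

end



context pbw begin

lemma foldrR: "(\<And>b. b \<in> set ls \<Longrightarrow> E b \<in> R) \<Longrightarrow> foldr (\<lambda>b acc. E b * acc) ls 1 \<in> R"
  by (induction ls) auto

lemma foldr_rann:
  assumes "\<And>b. b \<in> set ls \<Longrightarrow> E b \<in> R \<and> (\<forall>r\<in>R. E b * r = r * E b)"
    and "a \<in> R" "a \<in> set ls" "a * E a = 0"
  shows "a * foldr (\<lambda>b acc. E b * acc) ls 1 = 0"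
  using assms
proof (induction ls)
  case Nil then show ?case by simp
next
  case (Cons b bs)
  show ?case
  proof (cases "a = b")
    case True then show ?thesis using Cons.prems by (simp add: mult.assoc[symmetric])
  next
    case False
    then have "a * foldr (\<lambda>b acc. E b * acc) bs 1 = 0" using Cons by auto
    moreover have "a * E b = E b * a" using Cons.prems by auto
    ultimately show ?thesis by (simp add: mult.assoc[symmetric]) (simp add: mult.assoc)
  qed
qed

lemma foldr_lann:
  assumes "\<And>b. b \<in> set ls \<Longrightarrow> E b \<in> R \<and> (\<forall>r\<in>R. E b * r = r * E b)"
    and "a \<in> R" "a \<in> set ls" "E a * a = 0"
  shows "foldr (\<lambda>b acc. E b * acc) ls 1 * a = 0"
  using assms
proof (induction ls)
  case Nil then show ?case by simp
next
  case (Cons b bs)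
  have rR: "foldr (\<lambda>b acc. E b * acc) bs 1 \<in> R" using Cons.prems(1) by (intro foldrR) auto
  show ?case
  proof (cases "a \<in> set bs")
    case True
    then have "foldr (\<lambda>b acc. E b * acc) bs 1 * a = 0" using Cons by auto
    then show ?thesis by (simp add: mult.assoc)
  next
    case False
    then have ab: "a = b" using Cons.prems by auto
    have "E a * foldr (\<lambda>b acc. E b * acc) bs 1 = foldr (\<lambda>b acc. E b * acc) bs 1 * E a"
      using Cons.prems(1) ab rR by auto
    then have "E a * foldr (\<lambda>b acc. E b * acc) bs 1 * a = foldr (\<lambda>b acc. E b * acc) bs 1 * (E a * a)"
      by (simp add: mult.assoc)
    then show ?thesis using ab Cons.prems by simp
  qed
qed

lemma foldr_fixL:
  fixes E :: "'a \<Rightarrow> 'a" and y :: 'a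
  assumes "\<And>b. b \<in> set ls \<Longrightarrow> E b * y = y"
  shows "foldr (\<lambda>b acc. E b * acc) ls 1 * y = y"
  using assms by (induction ls) (auto simp: mult.assoc)

lemma foldr_fixR:
  fixes E :: "'a \<Rightarrow> 'a" and y :: 'a
  assumes "\<And>b. b \<in> set ls \<Longrightarrow> y * E b = y"
  shows "y * foldr (\<lambda>b acc. E b * acc) ls 1 = y"
  using assms by (induction ls) (auto simp: mult.assoc[symmetric])

lemma gen_sum: fixes g :: "nat \<Rightarrow> 'a" shows "k < m \<Longrightarrow> (\<Sum>j<m. g j * (if j = k then t else 0)) = g k * t"
proof -
  assume k: "k < m"
  have "(\<Sum>j<m. g j * (if j = k then t else 0)) = (\<Sum>j<m. if j = k then g k * t else 0)"
    by (rule sum.cong) auto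
  then show ?thesis using k by simp
qed

lemma gen_sum': fixes g :: "nat \<Rightarrow> 'a" shows "k < m \<Longrightarrow> (\<Sum>j<m. (if j = k then t else 0) * g j) = t * g k"
proof -
  assume k: "k < m"
  have "(\<Sum>j<m. (if j = k then t else 0) * g j) = (\<Sum>j<m. if j = k then t * g k else 0)"
    by (rule sum.cong) auto
  then show ?thesis using k by simp
qed

lemma expand_e: "(\<And>\<beta>. coef h \<beta> = e * coef h \<beta>) \<Longrightarrow> e \<in> R \<Longrightarrow> h = e * h"
proof -
  assume a: "\<And>\<beta>. coef h \<beta> = e * coef h \<beta>" and e: "e \<in> R"
  have "h = (\<Sum>\<gamma>\<in>spt (coef h). coef h \<gamma> * X \<gamma>)" by (rule coef_expand)
  also have "\<dots> = (\<Sum>\<gamma>\<in>spt (coef h). e * (coef h \<gamma> * X \<gamma>))"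
    by (rule sum.cong[OF refl]) (subst a, simp add: mult.assoc)
  also have "\<dots> = e * h" by (subst (2) coef_expand[of h]) (simp add: sum_distrib_left)
  finally show ?thesis .
qed

lemma right_ann_e: "(\<And>\<alpha>. \<alpha> \<in> spt (coef f) \<Longrightarrow> coef f \<alpha> * e = 0) \<Longrightarrow> e \<in> R \<Longrightarrow> f * e = 0"
proof -
  assume a: "\<And>\<alpha>. \<alpha> \<in> spt (coef f) \<Longrightarrow> coef f \<alpha> * e = 0" and e: "e \<in> R"
  have "f * e = (\<Sum>\<gamma>\<in>spt (coef f). coef f \<gamma> * X \<gamma>) * e" using coef_expand[of f] by (rule arg_cong)
  also have "\<dots> = (\<Sum>\<gamma>\<in>spt (coef f). coef f \<gamma> * (X \<gamma> * e))" by (simp add: sum_distrib_right mult.assoc)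
  also have "\<dots> = 0" using a Gann e by (intro sum.neutral) auto
  finally show ?thesis .
qed

lemma left_ann_e: "(\<And>\<alpha>. \<alpha> \<in> spt (coef f) \<Longrightarrow> e * coef f \<alpha> = 0) \<Longrightarrow> e * f = 0"
proof -
  assume a: "\<And>\<alpha>. \<alpha> \<in> spt (coef f) \<Longrightarrow> e * coef f \<alpha> = 0"
  have "e * f = e * (\<Sum>\<gamma>\<in>spt (coef f). coef f \<gamma> * X \<gamma>)" using coef_expand[of f] by (rule arg_cong)
  also have "\<dots> = (\<Sum>\<gamma>\<in>spt (coef f). (e * coef f \<gamma>) * X \<gamma>)" by (simp add: sum_distrib_left mult.assoc)
  also have "\<dots> = 0" using a by (intro sum.neutral) auto
  finally show ?thesis .
qed

lemma fe_zero: "(\<And>\<beta>. coef h \<beta> * e = 0) \<Longrightarrow> e \<in> R \<Longrightarrow> h * e = 0"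
  using right_ann_e by blast

definition Cset :: "(nat \<Rightarrow> 'a) \<Rightarrow> nat \<Rightarrow> 'a set" where
  "Cset g m = (\<Union>k\<in>{..<m}. coef (g k) ` spt (coef (g k)))"

lemma Cset_fin: "finite (Cset g m)" unfolding Cset_def using coef_fin by auto
lemma Cset_R: "Cset g m \<subseteq> R" unfolding Cset_def by auto
lemma Cset_mem: "k < m \<Longrightarrow> \<alpha> \<in> spt (coef (g k)) \<Longrightarrow> coef (g k) \<alpha> \<in> Cset g m"
  unfolding Cset_def by blast

lemma ac_right_thm:
  assumes ab: "abelian_ring R" and pp: "right_pp R"
  shows "ac_right TYPE('a)"
  unfolding ac_right_def
proof (intro allI)
  fix g :: "nat \<Rightarrow> 'a" and m :: nat
  define E where "E a = (SOME e. e \<in> R \<and> e * e = e \<and> r_ann R {a} = {e * r |r. r \<in> R})" for a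
  have Ep: "E a \<in> R \<and> E a * E a = E a \<and> r_ann R {a} = {E a * r |r. r \<in> R}" if "a \<in> R" for a
    unfolding E_def by (rule someI_ex) (use pp that in \<open>auto simp: right_pp_def\<close>)
  have Ec: "\<forall>r\<in>R. E a * r = r * E a" if "a \<in> R" for a using Ep[OF that] ab unfolding abelian_ring_def by blast
  have Ea: "a * E a = 0" if "a \<in> R" for a
  proof -
    have "E a \<in> r_ann R {a}" using Ep[OF that] by (metis (mono_tags, lifting) R1 mem_Collect_eq mult_1_right)
    then show ?thesis unfolding r_ann_def by simp
  qed
  have Ey: "E a * y = y" if ay: "a \<in> R" "y \<in> R" "a * y = 0" for a y
  proof -
    have "y \<in> r_ann R {a}" unfolding r_ann_def using ay by simp
    then obtain r where "y = E a * r" using Ep[OF ay(1)] by blast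
    then show ?thesis using Ep[OF ay(1)] by (simp add: mult.assoc[symmetric])
  qed
  obtain ls where ls: "set ls = Cset g m" using Cset_fin finite_list by blast
  have lsR: "\<And>b. b \<in> set ls \<Longrightarrow> b \<in> R" using ls Cset_R by blast
  define e where "e = foldr (\<lambda>b acc. E b * acc) ls 1"
  have eR: "e \<in> R" unfolding e_def using Ep lsR by (intro foldrR) auto
  have gke: "g k * e = 0" if k: "k < m" for k
  proof (rule right_ann_e[OF _ eR])
    fix \<alpha> assume "\<alpha> \<in> spt (coef (g k))"
    then have c: "coef (g k) \<alpha> \<in> set ls" using ls Cset_mem k by blast
    show "coef (g k) \<alpha> * e = 0" unfolding e_def
      by (rule foldr_rann) (use c lsR Ep Ec Ea in auto)
  qed
  show "\<exists>c. r_ann UNIV (right_ideal_gen g m) = r_ann UNIV {c * t |t. True}"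
  proof (intro exI[of _ "1 - e"] set_eqI iffI)
    fix h assume h: "h \<in> r_ann UNIV (right_ideal_gen g m)"
    have "(1 - e) * t * h = 0" for t
    proof -
      have "g k * (t * h) = 0" if k: "k < m" for k
      proof -
        have "g k * t \<in> right_ideal_gen g m" unfolding right_ideal_gen_def mem_Collect_eq
          by (rule exI[of _ "\<lambda>j. if j = k then t else 0"]) (simp add: gen_sum[OF k])
        then have "g k * t * h = 0" using h unfolding r_ann_def by blast
        then show ?thesis by (simp add: mult.assoc)
      qed
      note gth = this
      have ann: "coef (g k) \<alpha> * coef (t * h) \<beta> = 0" if "k < m" for k \<alpha> \<beta>
        by (rule arm) (rule gth[OF that])
      have "coef (t * h) \<beta> = e * coef (t * h) \<beta>" for \<beta>
      proof -
        have "E b * coef (t * h) \<beta> = coef (t * h) \<beta>" if "b \<in> set ls" for b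
        proof -
          have "b \<in> Cset g m" using that ls by simp
          then obtain k \<alpha> where ka: "k < m" "b = coef (g k) \<alpha>" unfolding Cset_def by auto
          have "b * coef (t * h) \<beta> = 0" using ann[OF ka(1)] ka(2) by simp
          then show ?thesis using Ey[of b "coef (t * h) \<beta>"] ka(2) by simp
        qed
        then show ?thesis unfolding e_def by (rule foldr_fixL[symmetric])
      qed
      then have "t * h = e * (t * h)" using eR by (rule expand_e)
      then show ?thesis by (simp add: left_diff_distrib mult.assoc)
    qed
    then show "h \<in> r_ann UNIV {(1 - e) * t |t. True}" unfolding r_ann_def by (auto simp: mult.assoc)
  next
    fix h assume h: "h \<in> r_ann UNIV {(1 - e) * t |t. True}"
    have th: "t * h = e * t * h" for t
    proof -
      have "(1 - e) * t * h = 0" using h unfolding r_ann_def by (auto simp: mult.assoc)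
      then show ?thesis by (simp add: left_diff_distrib)
    qed
    have "s * h = 0" if sI: "s \<in> right_ideal_gen g m" for s
    proof -
      obtain tt where s: "s = (\<Sum>k<m. g k * tt k)" using sI unfolding right_ideal_gen_def by blast
      have "s * h = (\<Sum>k<m. g k * tt k * h)" unfolding s by (rule sum_distrib_right)
      also have "\<dots> = (\<Sum>k<m. g k * (tt k * h))" by (rule sum.cong[OF refl]) (simp add: mult.assoc)
      also have "\<dots> = (\<Sum>k<m. (g k * e) * (tt k * h))"
      proof (rule sum.cong[OF refl])
        fix k
        have "g k * (tt k * h) = g k * (e * tt k * h)" using th[of "tt k"] by (rule arg_cong)
        then show "g k * (tt k * h) = (g k * e) * (tt k * h)" by (simp add: mult.assoc)
      qed
      also have "\<dots> = 0" using gke by simp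
      finally show ?thesis .
    qed
    then show "h \<in> r_ann UNIV (right_ideal_gen g m)" unfolding r_ann_def by auto
  qed
qed

lemma expand_e_right: "(\<And>\<beta>. coef h \<beta> * e = 0) \<Longrightarrow> e \<in> R \<Longrightarrow> h * e = 0"
  by (rule right_ann_e) auto

lemma ac_left_thm:
  assumes ab: "abelian_ring R" and pp: "left_pp R"
  shows "ac_left TYPE('a)"
  unfolding ac_left_def
proof (intro allI)
  fix g :: "nat \<Rightarrow> 'a" and m :: nat
  define E where "E a = (SOME e. e \<in> R \<and> e * e = e \<and> l_ann R {a} = {r * e |r. r \<in> R})" for a
  have Ep: "E a \<in> R \<and> E a * E a = E a \<and> l_ann R {a} = {r * E a |r. r \<in> R}" if "a \<in> R" for a
    unfolding E_def by (rule someI_ex) (use pp that in \<open>auto simp: left_pp_def\<close>)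
  have Ec: "\<forall>r\<in>R. E a * r = r * E a" if "a \<in> R" for a using Ep[OF that] ab unfolding abelian_ring_def by blast
  have Ea: "E a * a = 0" if aR: "a \<in> R" for a
  proof -
    have "E a \<in> l_ann R {a}" using Ep[OF aR] by (metis (mono_tags, lifting) R1 mem_Collect_eq mult_1_left)
    then show ?thesis unfolding l_ann_def by simp
  qed
  have Ey: "y * E a = y" if ay: "a \<in> R" "y \<in> R" "y * a = 0" for a y
  proof -
    have "y \<in> l_ann R {a}" unfolding l_ann_def using ay by simp
    then obtain r where "y = r * E a" using Ep[OF ay(1)] by blast
    then show ?thesis using Ep[OF ay(1)] by (simp add: mult.assoc)
  qed
  obtain ls where ls: "set ls = Cset g m" using Cset_fin finite_list by blast
  have lsR: "\<And>b. b \<in> set ls \<Longrightarrow> b \<in> R" using ls Cset_R by blast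
  define e where "e = foldr (\<lambda>b acc. E b * acc) ls 1"
  have eR: "e \<in> R" unfolding e_def using Ep lsR by (intro foldrR) auto
  have egk: "e * g k = 0" if k: "k < m" for k
  proof (rule left_ann_e)
    fix \<alpha> assume "\<alpha> \<in> spt (coef (g k))"
    then have c: "coef (g k) \<alpha> \<in> set ls" using ls Cset_mem k by blast
    show "e * coef (g k) \<alpha> = 0" unfolding e_def
      by (rule foldr_lann) (use c lsR Ep Ec Ea in auto)
  qed
  show "\<exists>c. l_ann UNIV (left_ideal_gen g m) = l_ann UNIV {t * c |t. True}"
  proof (intro exI[of _ "1 - e"] set_eqI iffI)
    fix h assume h: "h \<in> l_ann UNIV (left_ideal_gen g m)"
    have "h * (t * (1 - e)) = 0" for t
    proof -
      have "(h * t) * g k = 0" if k: "k < m" for k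
      proof -
        have "t * g k \<in> left_ideal_gen g m" unfolding left_ideal_gen_def mem_Collect_eq
          by (rule exI[of _ "\<lambda>j. if j = k then t else 0"]) (simp add: gen_sum'[OF k])
        then have "h * (t * g k) = 0" using h unfolding l_ann_def by blast
        then show ?thesis by (simp add: mult.assoc)
      qed
      note gth = this
      have ann: "coef (h * t) \<beta> * coef (g k) \<alpha> = 0" if "k < m" for k \<alpha> \<beta>
        by (rule arm) (rule gth[OF that])
      have "coef (h * t) \<beta> * (1 - e) = 0" for \<beta>
      proof -
        have "coef (h * t) \<beta> * E b = coef (h * t) \<beta>" if "b \<in> set ls" for b
        proof -
          have "b \<in> Cset g m" using that ls by simp
          then obtain k \<alpha> where ka: "k < m" "b = coef (g k) \<alpha>" unfolding Cset_def by auto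
          have "coef (h * t) \<beta> * b = 0" using ann[OF ka(1)] ka(2) by simp
          then show ?thesis using Ey[of b "coef (h * t) \<beta>"] ka(2) by simp
        qed
        then have "coef (h * t) \<beta> * e = coef (h * t) \<beta>" unfolding e_def by (rule foldr_fixR)
        then show ?thesis by (simp add: right_diff_distrib)
      qed
      note cz = this
      have "(h * t) * (1 - e) = 0" by (rule expand_e_right[OF cz Rdiff[OF R1 eR]])
      then show ?thesis by (simp add: mult.assoc)
    qed
    then show "h \<in> l_ann UNIV {t * (1 - e) |t. True}" unfolding l_ann_def by auto
  next
    fix h assume h: "h \<in> l_ann UNIV {t * (1 - e) |t. True}"
    have th: "h * t = h * t * e" for t
    proof -
      have z: "h * (t * (1 - e)) = 0" using h unfolding l_ann_def by blast
      have "h * (t * (1 - e)) = h * t - h * t * e" by (simp add: right_diff_distrib mult.assoc)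
      then have "h * t - h * t * e = 0" using z by simp
      then show ?thesis by simp
    qed
    have "h * s = 0" if sI: "s \<in> left_ideal_gen g m" for s
    proof -
      obtain tt where s: "s = (\<Sum>k<m. tt k * g k)" using sI unfolding left_ideal_gen_def by blast
      have "h * s = (\<Sum>k<m. h * (tt k * g k))" unfolding s by (rule sum_distrib_left)
      also have "\<dots> = (\<Sum>k<m. (h * tt k) * (e * g k))"
      proof (rule sum.cong)
        fix k assume k: "k \<in> {..<m}"
        have "(h * tt k) * g k = (h * tt k * e) * g k" using th[of "tt k"] by (rule arg_cong[where f="\<lambda>z. z * g k"])
        then have "h * (tt k * g k) = (h * tt k * e) * g k" by (simp only: mult.assoc)
        then show "h * (tt k * g k) = (h * tt k) * (e * g k)" by (simp add: mult.assoc)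
      qed simp
      also have "\<dots> = 0" using egk by simp
      finally show ?thesis .
    qed
    then show "h \<in> l_ann UNIV (left_ideal_gen g m)" unfolding l_ann_def by auto
  qed
qed

end

theorem mainTheorem3:
  fixes R :: "'a::ring_1 set" and x :: "nat \<Rightarrow> 'a" and n :: nat
    and \<sigma> \<delta> :: "nat \<Rightarrow> 'a \<Rightarrow> 'a"
  assumes "skew_PBW R x n"
    and "skew_PBW_maps R x n \<sigma> \<delta>"
    and "bijective_skew_PBW R x n \<sigma>"
    and "Sigma_rigid R \<sigma> n"
    and "abelian_ring R"
    and "NI_ring R"
  shows "(right_pp R \<longrightarrow> ac_right TYPE('a)) \<and> (left_pp R \<longrightarrow> ac_left TYPE('a))"
proof -
  interpret pbw R x n \<sigma> \<delta> using assms(1-4) by unfold_locales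
  show ?thesis using ac_right_thm[OF assms(5)] ac_left_thm[OF assms(5)] by blast
qed



end
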